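(* Let $c>0$. There exists $K>1$ such that for all $u>0$ small enough, \[ P^k\big(1_{\{h_k\ge L\}}H\big)\le K e^{-\frac{uL}{\sqrt k}}\|H\|_{L^1(\mu)}, \] uniformly in $L$, in integers $M\ge1$, in $k\ge M^2$, and in functions $H$ satisfying $|H(y)|\le|H(z)|e^{c\theta^{-M}d_\theta(y,z)}$ for all $y,z$ in a common $M$-cylinder.
   Context: $X\subset\mathcal A^{\mathbb N}$ is a one-sided topologically mixing subshift of finite type with shift $f$ and $\mu$ an equilibrium state of a normalized Hölder potential; $h\colon X\to\mathbb Z$ depends only on $x_0$, is $\mu$-centered and non-arithmetic (not cohomologous in $L^2(\mu)$ to a function with values in a proper sublattice); $h_k=\sum_{j<k}h\circ f^j$. $P$ is the transfer operator of $(X,f,\mu)$ ($\int P(G)H\,d\mu=\int G\,H\circ f\,d\mu$). $\theta\in(0,1)$ fixed; $d_\theta(y,z)=\theta^n$ with $n$ the largest integer such that $y_k=z_k$ for $0\le k<n$; $M$-cylinders are sets $\{x':x'_k=a_k,0\le k\le M\}$. *)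

theory Defs
  imports "HOL-Probability.Probability"
begin

definition sft :: "('a \<Rightarrow> 'a \<Rightarrow> bool) \<Rightarrow> (nat \<Rightarrow> 'a) set" where
  "sft A = {x. \<forall>n. A (x n) (x (Suc n))}"

definition shift :: "(nat \<Rightarrow> 'a) \<Rightarrow> (nat \<Rightarrow> 'a)" where
  "shift x = (\<lambda>n. x (Suc n))"

text \<open>Topological mixing, written out on the basis of cylinder sets:
  for nonempty cylinders U, V there is N with f^n(U) meeting V for all n >= N.\<close>
definition topologically_mixing_sft :: "('a \<Rightarrow> 'a \<Rightarrow> bool) \<Rightarrow> bool" where
  "topologically_mixing_sft A \<longleftrightarrow>
     (\<forall>x\<in>sft A. \<forall>y\<in>sft A. \<forall>m::nat. \<exists>N. \<forall>n\<ge>N. \<exists>z\<in>sft A.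
        (\<forall>k\<le>m. z k = x k) \<and> (\<forall>k\<le>m. (shift ^^ n) z k = y k))"

definition dtheta :: "real \<Rightarrow> (nat \<Rightarrow> 'a) \<Rightarrow> (nat \<Rightarrow> 'a) \<Rightarrow> real" where
  "dtheta \<theta> y z = (if y = z then 0 else \<theta> ^ (LEAST n. y n \<noteq> z n))"

definition same_cylinder :: "nat \<Rightarrow> (nat \<Rightarrow> 'a) \<Rightarrow> (nat \<Rightarrow> 'a) \<Rightarrow> bool" where
  "same_cylinder M y z \<longleftrightarrow> (\<forall>k\<le>M. y k = z k)"

definition cylinder_sets :: "('a \<Rightarrow> 'a \<Rightarrow> bool) \<Rightarrow> (nat \<Rightarrow> 'a) set set" where
  "cylinder_sets A = {{x \<in> sft A. \<forall>k\<le>m. x k = w k} | m w. True}"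

definition holder_potential :: "('a \<Rightarrow> 'a \<Rightarrow> bool) \<Rightarrow> real \<Rightarrow> ((nat \<Rightarrow> 'a) \<Rightarrow> real) \<Rightarrow> bool" where
  "holder_potential A \<theta> \<phi> \<longleftrightarrow>
     (\<exists>C \<beta>. \<beta> > 0 \<and> (\<forall>y\<in>sft A. \<forall>z\<in>sft A. \<bar>\<phi> y - \<phi> z\<bar> \<le> C * dtheta \<theta> y z powr \<beta>))"

definition transfer :: "('a \<Rightarrow> 'a \<Rightarrow> bool) \<Rightarrow> ((nat \<Rightarrow> 'a) \<Rightarrow> real)
    \<Rightarrow> ((nat \<Rightarrow> 'a) \<Rightarrow> real) \<Rightarrow> (nat \<Rightarrow> 'a) \<Rightarrow> real" where
  "transfer A \<phi> G x = (\<Sum>y\<in>{y \<in> sft A. shift y = x}. exp (\<phi> y) * G y)"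

definition normalized_potential :: "('a \<Rightarrow> 'a \<Rightarrow> bool) \<Rightarrow> ((nat \<Rightarrow> 'a) \<Rightarrow> real) \<Rightarrow> bool" where
  "normalized_potential A \<phi> \<longleftrightarrow>
     (\<forall>x\<in>sft A. (\<Sum>y\<in>{y \<in> sft A. shift y = x}. exp (\<phi> y)) = 1)"

text \<open>Equilibrium state of a normalized potential: the probability measure on X
  (cylinder sigma-algebra) fixed by the dual of the transfer operator.\<close>
definition equilibrium_state :: "('a \<Rightarrow> 'a \<Rightarrow> bool) \<Rightarrow> ((nat \<Rightarrow> 'a) \<Rightarrow> real)
    \<Rightarrow> (nat \<Rightarrow> 'a) measure \<Rightarrow> bool" where
  "equilibrium_state A \<phi> \<mu> \<longleftrightarrow>
     prob_space \<mu> \<and> space \<mu> = sft A \<and> sets \<mu> = sigma_sets (sft A) (cylinder_sets A) \<and>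
     (\<forall>G \<in> borel_measurable \<mu>. bounded (G ` sft A) \<longrightarrow>
        integral\<^sup>L \<mu> (transfer A \<phi> G) = integral\<^sup>L \<mu> G)"

text \<open>Non-arithmetic: h is not cohomologous in L^2(mu) to a function with values
  in a proper sublattice d*Z (d >= 2) of Z.\<close>
definition non_arithmetic :: "(nat \<Rightarrow> 'a) measure \<Rightarrow> ((nat \<Rightarrow> 'a) \<Rightarrow> int) \<Rightarrow> bool" where
  "non_arithmetic \<mu> h \<longleftrightarrow>
     \<not> (\<exists>d::int. d \<ge> 2 \<and> (\<exists>g u. u \<in> borel_measurable \<mu> \<and> integrable \<mu> (\<lambda>x. (u x)\<^sup>2) \<and>
          (\<forall>x\<in>space \<mu>. \<exists>j::int. g x = real_of_int (d * j)) \<and>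
          (AE x in \<mu>. real_of_int (h x) = g x + u (shift x) - u x)))"

definition birkhoff :: "((nat \<Rightarrow> 'a) \<Rightarrow> int) \<Rightarrow> nat \<Rightarrow> (nat \<Rightarrow> 'a) \<Rightarrow> int" where
  "birkhoff h k x = (\<Sum>j<k. h ((shift ^^ j) x))"

end

theory Submission imports Defs begin

lemma shift_apply: "shift x n = x (Suc n)" by (simp add: shift_def)

lemma funpow_shift: "(shift ^^ n) x = (\<lambda>i. x (i + n))"
  by (induction n arbitrary: x) (auto simp: shift_def funpow_Suc_right)

lemma sft_shift: "x \<in> sft A \<Longrightarrow> shift x \<in> sft A"
  by (simp add: sft_def shift_def)

lemma sft_funpow_shift: "x \<in> sft A \<Longrightarrow> (shift ^^ n) x \<in> sft A"
  by (simp add: sft_def funpow_shift)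

lemma sft_cons: "x \<in> sft A \<Longrightarrow> (case_nat a x \<in> sft A) \<longleftrightarrow> A a (x 0)"
  apply (simp add: sft_def)
  apply (rule iffI)
   apply (erule allE[of _ 0], simp)
  apply (intro allI, case_tac n, auto)
  done

lemma shift_cons[simp]: "shift (case_nat a x) = x"
  by (simp add: shift_def)

lemma pre_eq:
  assumes "x \<in> sft A"
  shows "{y \<in> sft A. shift y = x} = (\<lambda>a. case_nat a x) ` {a. A a (x 0)}"
proof
  show "{y \<in> sft A. shift y = x} \<subseteq> (\<lambda>a. case_nat a x) ` {a. A a (x 0)}"
  proof
    fix y assume y: "y \<in> {y \<in> sft A. shift y = x}"
    have "y = case_nat (y 0) x" using y by (auto simp: fun_eq_iff shift_def split: nat.split)
    moreover have "A (y 0) (x 0)" using y by (auto simp: sft_def shift_def)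
    ultimately show "y \<in> (\<lambda>a. case_nat a x) ` {a. A a (x 0)}" by blast
  qed
  show "(\<lambda>a. case_nat a x) ` {a. A a (x 0)} \<subseteq> {y \<in> sft A. shift y = x}"
    using sft_cons[OF assms] by auto
qed

lemma inj_cons: "inj (\<lambda>a. case_nat a x)"
  by (rule injI) (metis old.nat.simps(4))

lemma transfer_letters:
  assumes "x \<in> sft A"
  shows "transfer A \<phi> F x = (\<Sum>a\<in>{a. A a (x 0)}. exp (\<phi> (case_nat a x)) * F (case_nat a x))"
  unfolding transfer_def pre_eq[OF assms]
  by (subst sum.reindex) (auto intro: inj_on_subset[OF inj_cons])

lemma norm_letters:
  assumes "normalized_potential A \<phi>" "x \<in> sft A"
  shows "(\<Sum>a\<in>{a. A a (x 0)}. exp (\<phi> (case_nat a x))) = 1"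
proof -
  have "(\<Sum>y\<in>{y \<in> sft A. shift y = x}. exp (\<phi> y)) = 1" using assms by (simp add: normalized_potential_def)
  then show ?thesis unfolding pre_eq[OF assms(2)]
    by (subst (asm) sum.reindex) (auto intro: inj_on_subset[OF inj_cons])
qed


locale sys =
  fixes A :: "'a::finite \<Rightarrow> 'a \<Rightarrow> bool" and \<phi> :: "(nat \<Rightarrow> 'a) \<Rightarrow> real"
    and \<mu> :: "(nat \<Rightarrow> 'a) measure" and \<theta> :: real
  assumes mixing: "topologically_mixing_sft A"
    and th0: "0 < \<theta>" and th1: "\<theta> < 1"
    and holder: "holder_potential A \<theta> \<phi>"
    and normalized: "normalized_potential A \<phi>"
    and equilibrium: "equilibrium_state A \<phi> \<mu>"
begin

abbreviation "X \<equiv> sft A"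
abbreviation "P \<equiv> transfer A \<phi>"

lemma prob: "prob_space \<mu>" using equilibrium by (simp add: equilibrium_state_def)
lemma space_mu: "space \<mu> = X" using equilibrium by (simp add: equilibrium_state_def)
lemma sets_mu: "sets \<mu> = sigma_sets X (cylinder_sets A)" using equilibrium by (simp add: equilibrium_state_def)
lemma X_ne: "X \<noteq> {}" using prob_space.not_empty[OF prob] space_mu by simp

lemma P_cong: "(\<And>y. y \<in> X \<Longrightarrow> F y = G y) \<Longrightarrow> P F x = P G x"
  unfolding transfer_def by (rule sum.cong) auto

lemma P_mono: "(\<And>y. y \<in> X \<Longrightarrow> F y \<le> G y) \<Longrightarrow> P F x \<le> P G x"
  unfolding transfer_def by (rule sum_mono) (auto intro: mult_left_mono)

lemma P_nonneg: "(\<And>y. y \<in> X \<Longrightarrow> 0 \<le> F y) \<Longrightarrow> 0 \<le> P F x"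
  unfolding transfer_def by (rule sum_nonneg) auto

lemma P_const: "x \<in> X \<Longrightarrow> P (\<lambda>_. c) x = c"
  using norm_letters[OF normalized, of x] transfer_letters[of x A \<phi> "\<lambda>_. c"]
  by (simp add: sum_distrib_right[symmetric])

lemma P_add: "P (\<lambda>y. F y + G y) x = P F x + P G x"
  unfolding transfer_def by (simp add: distrib_left sum.distrib)

lemma P_diff: "P (\<lambda>y. F y - G y) x = P F x - P G x"
  unfolding transfer_def by (simp add: right_diff_distrib sum_subtractf)

lemma P_cmult: "P (\<lambda>y. c * F y) x = c * P F x"
  unfolding transfer_def by (simp add: sum_distrib_left algebra_simps)

lemma P_sum: "P (\<lambda>y. \<Sum>i\<in>I. f i y) x = (\<Sum>i\<in>I. P (f i) x)"
  unfolding transfer_def by (simp add: sum_distrib_left sum.swap[of _ I])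

lemma P_mult_shift: "P (\<lambda>y. F y * W (shift y)) x = W x * P F x"
proof -
  have "P (\<lambda>y. F y * W (shift y)) x = (\<Sum>y\<in>{y \<in> X. shift y = x}. exp (\<phi> y) * (F y * W x))"
    unfolding transfer_def by (rule sum.cong) auto
  also have "\<dots> = W x * P F x" unfolding transfer_def by (simp add: sum_distrib_left algebra_simps)
  finally show ?thesis .
qed

lemma P_abs_bound: "(\<And>y. y \<in> X \<Longrightarrow> \<bar>F y\<bar> \<le> B) \<Longrightarrow> x \<in> X \<Longrightarrow> \<bar>P F x\<bar> \<le> B"
proof -
  assume b: "\<And>y. y \<in> X \<Longrightarrow> \<bar>F y\<bar> \<le> B" and x: "x \<in> X"
  have "P F x \<le> P (\<lambda>_. B) x" using b by (intro P_mono) (simp add: abs_le_iff)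
  moreover have "P (\<lambda>_. - B) x \<le> P F x" using b by (intro P_mono) (force simp: abs_le_iff)
  ultimately show ?thesis using P_const[OF x] by (simp add: abs_le_iff)
qed

lemma Pn_cong: "(\<And>y. y \<in> X \<Longrightarrow> F y = G y) \<Longrightarrow> x \<in> X \<Longrightarrow> (P ^^ n) F x = (P ^^ n) G x"
proof (induction n arbitrary: x)
  case 0 then show ?case by simp
next
  case (Suc n) then show ?case by (auto intro!: P_cong)
qed

lemma Pn_mono: "(\<And>y. y \<in> X \<Longrightarrow> F y \<le> G y) \<Longrightarrow> x \<in> X \<Longrightarrow> (P ^^ n) F x \<le> (P ^^ n) G x"
proof (induction n arbitrary: x)
  case 0 then show ?case by simp
next
  case (Suc n) then show ?case by (auto intro!: P_mono)
qed

lemma Pn_const: "x \<in> X \<Longrightarrow> (P ^^ n) (\<lambda>_. c) x = c"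
proof (induction n arbitrary: x)
  case 0 then show ?case by simp
next
  case (Suc n)
  have "P ((P ^^ n) (\<lambda>_. c)) x = P (\<lambda>_. c) x" by (rule P_cong) (use Suc in auto)
  then show ?case using P_const[OF Suc.prems] by simp
qed

lemma Pn_nonneg: "(\<And>y. y \<in> X \<Longrightarrow> 0 \<le> F y) \<Longrightarrow> x \<in> X \<Longrightarrow> 0 \<le> (P ^^ n) F x"
  using Pn_mono[of "\<lambda>_. 0" F x n] Pn_const by (metis)


lemma Pn_add: "(P ^^ n) (\<lambda>y. F y + G y) = (\<lambda>y. (P ^^ n) F y + (P ^^ n) G y)"
  by (induction n) (auto simp: P_add)

lemma Pn_diff: "(P ^^ n) (\<lambda>y. F y - G y) = (\<lambda>y. (P ^^ n) F y - (P ^^ n) G y)"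
  by (induction n) (auto simp: P_diff)

lemma Pn_cmult: "(P ^^ n) (\<lambda>y. c * F y) = (\<lambda>y. c * (P ^^ n) F y)"
  by (induction n) (auto simp: P_cmult)

lemma Pn_sum: "(P ^^ n) (\<lambda>y. \<Sum>i\<in>I. f i y) = (\<lambda>y. \<Sum>i\<in>I. (P ^^ n) (f i) y)"
  by (induction n) (auto simp: P_sum)

lemma Pn_mult_shift: "(P ^^ n) (\<lambda>y. F y * W ((shift ^^ n) y)) = (\<lambda>x. W x * (P ^^ n) F x)"
proof (induction n arbitrary: F)
  case 0 then show ?case by (simp add: mult.commute)
next
  case (Suc n)
  have "(P ^^ Suc n) (\<lambda>y. F y * W ((shift ^^ Suc n) y)) = (P ^^ n) (P (\<lambda>y. F y * (\<lambda>z. W ((shift ^^ n) z)) (shift y)))"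
    by (simp add: funpow_Suc_right del: funpow.simps)
  also have "P (\<lambda>y. F y * (\<lambda>z. W ((shift ^^ n) z)) (shift y)) = (\<lambda>x. P F x * W ((shift ^^ n) x))"
    by (rule ext, subst P_mult_shift) (simp add: mult.commute)
  also have "(P ^^ n) \<dots> = (\<lambda>x. W x * (P ^^ n) (P F) x)" by (rule Suc.IH)
  finally show ?case by (simp add: funpow_Suc_right del: funpow.simps)
qed

lemma Pn_abs_bound: "(\<And>y. y \<in> X \<Longrightarrow> \<bar>F y\<bar> \<le> B) \<Longrightarrow> x \<in> X \<Longrightarrow> \<bar>(P ^^ n) F x\<bar> \<le> B"
proof (induction n arbitrary: x)
  case 0 then show ?case by simp
next
  case (Suc n) then show ?case by (auto intro!: P_abs_bound)
qed

lemma Pn_Suc_right: "(P ^^ Suc n) F = (P ^^ n) (P F)"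
  by (simp add: funpow_Suc_right del: funpow.simps)

lemma Pn_add_iter: "(P ^^ (m + n)) F = (P ^^ m) ((P ^^ n) F)"
  by (simp add: funpow_add)

end

lemma dtheta_nonneg: "0 \<le> \<theta> \<Longrightarrow> 0 \<le> dtheta \<theta> y z"
  by (simp add: dtheta_def)

lemma dtheta_le:
  assumes "0 \<le> \<theta>" "\<theta> \<le> 1" "\<forall>i<r. y i = z i"
  shows "dtheta \<theta> y z \<le> \<theta> ^ r"
proof (cases "y = z")
  case True then show ?thesis using assms by (simp add: dtheta_def)
next
  case False
  then obtain n where n: "y n \<noteq> z n" by (auto simp: fun_eq_iff)
  have "y (LEAST n. y n \<noteq> z n) \<noteq> z (LEAST n. y n \<noteq> z n)" using n by (rule LeastI)
  then have "r \<le> (LEAST n. y n \<noteq> z n)" using assms(3) by (meson not_le)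
  then show ?thesis using False assms by (simp add: dtheta_def power_decreasing)
qed

lemma powr_power_swap: "0 \<le> (x::real) \<Longrightarrow> (x ^ r) powr b = (x powr b) ^ r"
proof (induction r)
  case 0 then show ?case by simp
next
  case (Suc r)
  then show ?case using powr_mult[of x "x ^ r" b] by simp
qed

lemma key_ineq:
  fixes a b d m s :: real
  assumes "0 \<le> d" "0 \<le> m" "0 \<le> s" "a \<le> b * exp (s/2)" "d * m \<le> b"
  shows "a - d/2*m \<le> (b - d/2*m) * exp s"
proof -
  define e where "e = exp (s/2)"
  have es: "exp s = e * e" unfolding e_def by (simp add: exp_add[symmetric])
  have e1: "1 \<le> e" unfolding e_def using assms(3) by simp
  have dm: "0 \<le> d * m" using assms by simp
  have "d * m * e \<le> b * e" using assms(5) e1 by (intro mult_right_mono) auto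
  moreover have "d * m * ((e + 1) / 2) \<le> d * m * e" using dm e1 by (intro mult_left_mono) auto
  ultimately have p0: "0 \<le> b*e - d*m*(e+1)/2" by linarith
  have p: "0 \<le> (e-1)*(b*e - d*m*(e+1)/2)" using p0 e1 by simp
  have id: "(b - d/2*m)*(e*e) - (a - d/2*m) = (e-1)*(b*e - d*m*(e+1)/2) + (b*e - a)"
    by (simp add: field_simps)
  have "a \<le> b * e" using assms(4) unfolding e_def .
  then show ?thesis unfolding es using p id by linarith
qed

locale sys2 = sys A \<phi> \<mu> \<theta> for A :: "'a::finite \<Rightarrow> 'a \<Rightarrow> bool" and \<phi> \<mu> \<theta> +
  fixes Cphi \<beta> :: real
  assumes beta0: "0 < \<beta>" and beta1: "\<beta> \<le> 1" and Cphi0: "0 \<le> Cphi"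
    and hold: "\<And>y z. y \<in> sft A \<Longrightarrow> z \<in> sft A \<Longrightarrow> \<bar>\<phi> y - \<phi> z\<bar> \<le> Cphi * dtheta \<theta> y z powr \<beta>"
begin

definition "\<alpha> = \<theta> powr \<beta>"

lemma alpha0: "0 < \<alpha>" using th0 by (simp add: \<alpha>_def)
lemma alpha1: "\<alpha> < 1" using th0 th1 beta0 by (simp add: \<alpha>_def powr01_less_one)
lemma theta_le_alpha: "\<theta> \<le> \<alpha>"
  using powr_mono'[of \<beta> 1 \<theta>] th0 th1 beta1 by (simp add: \<alpha>_def)

lemma distortion:
  assumes "y \<in> X" "z \<in> X" "\<forall>i<r. y i = z i"
  shows "\<bar>\<phi> y - \<phi> z\<bar> \<le> Cphi * \<alpha> ^ r"
proof -
  have "dtheta \<theta> y z powr \<beta> \<le> (\<theta> ^ r) powr \<beta>"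
    using dtheta_le[of \<theta> r y z] dtheta_nonneg[of \<theta> y z] th0 th1 assms beta0
    by (intro powr_mono2) auto
  also have "\<dots> = \<alpha> ^ r" using th0 by (simp add: powr_power_swap \<alpha>_def)
  finally show ?thesis using hold[OF assms(1,2)] Cphi0 by (meson mult_left_mono order_trans)
qed

definition "Phi = Cphi - \<phi> (SOME x. x \<in> X)"

lemma phi_le0: "y \<in> X \<Longrightarrow> \<phi> y \<le> 0"
proof -
  assume y: "y \<in> X"
  have sy: "shift y \<in> X" using y by (rule sft_shift)
  have "y \<in> {z \<in> X. shift z = shift y}" using y by simp
  then have "exp (\<phi> y) \<le> (\<Sum>z\<in>{z \<in> X. shift z = shift y}. exp (\<phi> z))"
    by (intro member_le_sum) (auto simp: pre_eq[OF sy])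
  also have "\<dots> = 1" using normalized sy by (simp add: normalized_potential_def)
  finally show ?thesis by simp
qed

lemma phi_ge: "y \<in> X \<Longrightarrow> - Phi \<le> \<phi> y"
proof -
  assume y: "y \<in> X"
  have s: "(SOME x. x \<in> X) \<in> X" using X_ne by (simp add: some_in_eq)
  have "\<bar>\<phi> y - \<phi> (SOME x. x \<in> X)\<bar> \<le> Cphi * \<alpha> ^ 0" by (rule distortion[OF y s]) simp
  then show ?thesis by (simp add: Phi_def)
qed

lemma Phi0: "0 \<le> Phi" using phi_ge phi_le0 X_ne by fastforce


definition RegS :: "((nat \<Rightarrow> 'a) \<Rightarrow> real) \<Rightarrow> real \<Rightarrow> nat \<Rightarrow> bool" where
  "RegS F E s \<longleftrightarrow> (\<forall>y\<in>X. 0 \<le> F y) \<and>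
     (\<forall>r\<ge>s. \<forall>y\<in>X. \<forall>z\<in>X. (\<forall>i<r. y i = z i) \<longrightarrow> F y \<le> F z * exp (E * \<alpha> ^ r))"

lemma RegS_mono: "RegS F E s \<Longrightarrow> s \<le> s' \<Longrightarrow> E \<le> E' \<Longrightarrow> RegS F E' s'"
  unfolding RegS_def
proof (intro conjI allI impI ballI)
  fix r y z assume R: "(\<forall>y\<in>X. 0 \<le> F y) \<and> (\<forall>r\<ge>s. \<forall>y\<in>X. \<forall>z\<in>X. (\<forall>i<r. y i = z i) \<longrightarrow> F y \<le> F z * exp (E * \<alpha> ^ r))"
    and "s \<le> s'" "E \<le> E'" "s' \<le> r" "y \<in> X" "z \<in> X" "\<forall>i<r. y i = z i"
  then have "F y \<le> F z * exp (E * \<alpha> ^ r)" by auto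
  also have "\<dots> \<le> F z * exp (E' * \<alpha> ^ r)"
    using R \<open>z \<in> X\<close> \<open>E \<le> E'\<close> alpha0 by (intro mult_left_mono) (auto intro!: mult_right_mono)
  finally show "F y \<le> F z * exp (E' * \<alpha> ^ r)" .
qed auto

lemma RegS_P:
  assumes "1 \<le> s" "RegS F E (Suc s)"
  shows "RegS (P F) (\<alpha> * (Cphi + E)) s"
  unfolding RegS_def
proof (intro conjI allI impI ballI)
  fix y assume "y \<in> X" show "0 \<le> P F y" using assms(2) by (intro P_nonneg) (auto simp: RegS_def)
next
  fix r x x' assume r: "s \<le> r" and x: "x \<in> X" and x': "x' \<in> X" and ag: "\<forall>i<r. x i = x' i"
  have x0: "x' 0 = x 0" using ag r assms(1) by auto
  have trm: "exp (\<phi> (case_nat a x)) * F (case_nat a x) \<le>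
      exp (\<phi> (case_nat a x')) * F (case_nat a x') * exp (\<alpha> * (Cphi + E) * \<alpha> ^ r)"
    if a: "a \<in> {a. A a (x 0)}" for a
  proof -
    have ya: "case_nat a x \<in> X" using a sft_cons[OF x] by simp
    have za: "case_nat a x' \<in> X" using a sft_cons[OF x'] x0 by simp
    have ag': "\<forall>i<Suc r. case_nat a x i = case_nat a x' i" using ag by (auto split: nat.split)
    have d: "\<phi> (case_nat a x) \<le> \<phi> (case_nat a x') + Cphi * \<alpha> ^ Suc r"
      using distortion[OF ya za ag'] by simp
    have f: "F (case_nat a x) \<le> F (case_nat a x') * exp (E * \<alpha> ^ Suc r)"
      using assms(2) ya za ag' r unfolding RegS_def by auto
    have f0: "0 \<le> F (case_nat a x)" using assms(2) ya unfolding RegS_def by auto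
    have "exp (\<phi> (case_nat a x)) * F (case_nat a x) \<le> exp (\<phi> (case_nat a x') + Cphi * \<alpha> ^ Suc r) * (F (case_nat a x') * exp (E * \<alpha> ^ Suc r))"
      using d f f0 by (intro mult_mono) auto
    also have "\<dots> = exp (\<phi> (case_nat a x')) * F (case_nat a x') * exp (\<alpha> * (Cphi + E) * \<alpha> ^ r)"
      by (simp add: exp_add[symmetric] algebra_simps)
    finally show ?thesis .
  qed
  have "P F x \<le> (\<Sum>a\<in>{a. A a (x 0)}. exp (\<phi> (case_nat a x')) * F (case_nat a x') * exp (\<alpha> * (Cphi + E) * \<alpha> ^ r))"
    unfolding transfer_letters[OF x] by (rule sum_mono) (rule trm)
  also have "\<dots> = P F x' * exp (\<alpha> * (Cphi + E) * \<alpha> ^ r)"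
    unfolding transfer_letters[OF x'] x0 by (simp add: sum_distrib_right)
  finally show "P F x \<le> P F x' * exp (\<alpha> * (Cphi + E) * \<alpha> ^ r)" .
qed

definition "D0 = Cphi * \<alpha> / (1 - \<alpha>)"

lemma D0_nonneg: "0 \<le> D0" using Cphi0 alpha0 alpha1 by (simp add: D0_def)

lemma D0_eq: "\<alpha> * (Cphi + D0) = D0"
  using alpha1 by (simp add: D0_def field_simps)

lemma RegS_Pn:
  assumes "1 \<le> s" "RegS F E (s + j)"
  shows "RegS ((P ^^ j) F) (\<alpha> ^ j * E + D0) s"
  using assms
proof (induction j arbitrary: s)
  case 0 then show ?case using D0_nonneg by (auto intro: RegS_mono)
next
  case (Suc j)
  have "RegS ((P ^^ j) F) (\<alpha> ^ j * E + D0) (Suc s)" using Suc by simp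
  then have "RegS (P ((P ^^ j) F)) (\<alpha> * (Cphi + (\<alpha> ^ j * E + D0))) s" using Suc.prems(1) by (rule RegS_P[rotated])
  moreover have "\<alpha> * (Cphi + (\<alpha> ^ j * E + D0)) = \<alpha> ^ Suc j * E + D0"
    using D0_eq by (simp add: algebra_simps)
  ultimately show ?case by simp
qed


lemma build_pre:
  assumes z: "\<zeta> \<in> X" and x: "x \<in> X" and e: "\<zeta> n = x 0"
  shows "\<exists>y\<in>X. (shift ^^ n) y = x \<and> y 0 = \<zeta> 0"
proof -
  define y where "y i = (if i < n then \<zeta> i else x (i - n))" for i
  have "y \<in> X" unfolding sft_def mem_Collect_eq
  proof
    fix i
    show "A (y i) (y (Suc i))"
    proof (cases "Suc i < n")
      case True then show ?thesis using z by (simp add: y_def sft_def)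
    next
      case False
      show ?thesis
      proof (cases "i < n")
        case True
        then have "i = n - 1" "Suc i = n" using False by auto
        have "A (\<zeta> i) (\<zeta> (Suc i))" using z by (simp add: sft_def)
        then show ?thesis using e \<open>Suc i = n\<close> True by (simp add: y_def)
      next
        case False
        then have "Suc i - n = Suc (i - n)" by simp
        then show ?thesis using x False by (simp add: y_def sft_def)
      qed
    qed
  qed
  moreover have "(shift ^^ n) y = x" by (simp add: funpow_shift y_def)
  moreover have "y 0 = \<zeta> 0" using e by (cases n) (auto simp: y_def)
  ultimately show ?thesis by blast
qed

lemma mix_letters: "\<exists>N. \<forall>n\<ge>N. (\<exists>x\<in>X. x 0 = b) \<longrightarrow> (\<exists>z\<in>X. z 0 = a) \<longrightarrow> (\<exists>\<zeta>\<in>X. \<zeta> 0 = a \<and> \<zeta> n = b)"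
proof (cases "(\<exists>x\<in>X. x 0 = b) \<and> (\<exists>z\<in>X. z 0 = a)")
  case True
  then obtain x z where x: "x \<in> X" "x 0 = b" and z: "z \<in> X" "z 0 = a" by blast
  obtain N where N: "\<forall>n\<ge>N. \<exists>w\<in>X. (\<forall>k\<le>0. w k = z k) \<and> (\<forall>k\<le>0. (shift ^^ n) w k = x k)"
    using mixing x z unfolding topologically_mixing_sft_def by blast
  show ?thesis
  proof (intro exI allI impI)
    fix n assume "N \<le> n"
    then obtain w where "w \<in> X" "w 0 = z 0" "(shift ^^ n) w 0 = x 0" using N by auto
    then show "\<exists>\<zeta>\<in>X. \<zeta> 0 = a \<and> \<zeta> n = b" using x z by (auto simp: funpow_shift)
  qed
qed auto

lemma mix_pre: "\<exists>N0. \<forall>n\<ge>N0. \<forall>x\<in>X. \<forall>z\<in>X. \<exists>y\<in>X. (shift ^^ n) y = x \<and> y 0 = z 0"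
proof -
  have "\<forall>p::'a\<times>'a. \<exists>N. \<forall>n\<ge>N. (\<exists>x\<in>X. x 0 = snd p) \<longrightarrow> (\<exists>z\<in>X. z 0 = fst p) \<longrightarrow> (\<exists>\<zeta>\<in>X. \<zeta> 0 = fst p \<and> \<zeta> n = snd p)"
    using mix_letters by blast
  from choice[OF this] obtain Nf where Nf0: "\<forall>p::'a\<times>'a. \<forall>n\<ge>Nf p. (\<exists>x\<in>X. x 0 = snd p) \<longrightarrow> (\<exists>z\<in>X. z 0 = fst p) \<longrightarrow> (\<exists>\<zeta>\<in>X. \<zeta> 0 = fst p \<and> \<zeta> n = snd p)"
    by blast
  have Nf: "\<And>a b. \<forall>n\<ge>Nf (a, b). (\<exists>x\<in>X. x 0 = b) \<longrightarrow> (\<exists>z\<in>X. z 0 = a) \<longrightarrow> (\<exists>\<zeta>\<in>X. \<zeta> 0 = a \<and> \<zeta> n = b)"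
    using Nf0 by fastforce
  define N0 where "N0 = Max (range Nf)"
  have le: "Nf (a, b) \<le> N0" for a b unfolding N0_def by (rule Max_ge) auto
  show ?thesis
  proof (intro exI allI impI ballI)
    fix n x z assume n: "N0 \<le> n" and x: "x \<in> X" and z: "z \<in> X"
    have "Nf (z 0, x 0) \<le> n" using le[of "z 0" "x 0"] n by simp
    then obtain \<zeta> where "\<zeta> \<in> X" "\<zeta> 0 = z 0" "\<zeta> n = x 0"
      using Nf[of "z 0" "x 0"] x z by blast
    then show "\<exists>y\<in>X. (shift ^^ n) y = x \<and> y 0 = z 0" using build_pre[of \<zeta> x n] x by auto
  qed
qed

lemma P_ge_term:
  assumes "\<And>z. z \<in> X \<Longrightarrow> 0 \<le> F z" "y \<in> X"
  shows "exp (\<phi> y) * F y \<le> P F (shift y)"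
proof -
  have sy: "shift y \<in> X" using assms(2) by (rule sft_shift)
  have "finite {z \<in> X. shift z = shift y}" by (simp add: pre_eq[OF sy])
  then show ?thesis unfolding transfer_def using assms
    by (intro member_le_sum) auto
qed

lemma Pn_lower:
  assumes "\<And>z. z \<in> X \<Longrightarrow> 0 \<le> F z" "y \<in> X"
  shows "exp (- (real n * Phi)) * F y \<le> (P ^^ n) F ((shift ^^ n) y)"
  using assms
proof (induction n arbitrary: F y)
  case 0 then show ?case by simp
next
  case (Suc n)
  have nn: "\<And>z. z \<in> X \<Longrightarrow> 0 \<le> P F z" using Suc.prems(1) by (rule P_nonneg)
  have "exp (- Phi) * F y \<le> exp (\<phi> y) * F y"
    using phi_ge[OF Suc.prems(2)] Suc.prems by (intro mult_right_mono) auto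
  also have "\<dots> \<le> P F (shift y)" by (rule P_ge_term[OF Suc.prems])
  finally have a: "exp (- Phi) * F y \<le> P F (shift y)" .
  have "exp (- (real (Suc n) * Phi)) * F y = exp (- (real n * Phi)) * (exp (- Phi) * F y)"
    by (simp add: exp_add[symmetric] algebra_simps)
  also have "\<dots> \<le> exp (- (real n * Phi)) * P F (shift y)" using a by simp
  also have "\<dots> \<le> (P ^^ n) (P F) ((shift ^^ n) (shift y))"
    using Suc.IH[OF nn sft_shift[OF Suc.prems(2)]] .
  finally show ?case by (simp add: Pn_Suc_right funpow_Suc_right del: funpow.simps)
qed


subsection \<open>Measurability\<close>

lemma cyl_in_sets: "{x \<in> X. \<forall>k\<le>m. x k = w k} \<in> sets \<mu>"
proof -
  have "{x \<in> X. \<forall>k\<le>m. x k = w k} \<in> cylinder_sets A"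
    unfolding cylinder_sets_def mem_Collect_eq by (intro exI[of _ m] exI[of _ w]) simp
  then show ?thesis unfolding sets_mu by (rule sigma_sets.Basic)
qed

lemma FC_set:
  assumes "\<And>x y. (\<forall>i\<le>m. x i = y i) \<Longrightarrow> Q x = Q y"
  shows "{x \<in> X. Q x} \<in> sets \<mu>"
proof -
  define cyl where "cyl w = {x \<in> X. \<forall>k\<le>m. x k = w k}" for w
  define S where "S = {x \<in> X. Q x}"
  have eq: "S = \<Union> (cyl ` S)"
  proof (intro equalityI subsetI)
    fix x assume x: "x \<in> S"
    have "x \<in> cyl x" using x by (simp add: cyl_def S_def)
    then show "x \<in> \<Union> (cyl ` S)" using x by (rule UN_I[rotated])
  next
    fix x assume "x \<in> \<Union> (cyl ` S)"
    then obtain w where w: "w \<in> S" "x \<in> cyl w" by (rule UN_E)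
    then have x: "x \<in> X" "\<forall>k\<le>m. x k = w k" by (simp_all add: cyl_def)
    have "Q x = Q w" using x(2) by (intro assms) simp
    then show "x \<in> S" using w x by (simp add: S_def)
  qed
  have sub: "cyl ` S \<subseteq> cyl ` ({..m} \<rightarrow>\<^sub>E (UNIV :: 'a set))"
  proof
    fix Y assume "Y \<in> cyl ` S"
    then obtain w where Y: "Y = cyl w" by (rule imageE)
    have "cyl w = cyl (restrict w {..m})" unfolding cyl_def by simp
    moreover have "restrict w {..m} \<in> {..m} \<rightarrow>\<^sub>E (UNIV :: 'a set)" by simp
    ultimately show "Y \<in> cyl ` ({..m} \<rightarrow>\<^sub>E (UNIV :: 'a set))" using Y by (intro image_eqI[where x="restrict w {..m}"]) simp_all
  qed
  have fin: "finite (cyl ` S)"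
    by (rule finite_subset[OF sub]) (intro finite_imageI finite_PiE; simp)
  have "cyl ` S \<subseteq> sets \<mu>" unfolding cyl_def using cyl_in_sets by (intro image_subsetI)
  then have "\<Union> (cyl ` S) \<in> sets \<mu>" by (rule sets.finite_Union[OF fin])
  then show ?thesis using eq S_def by simp
qed

lemma FC_fun:
  fixes G :: "(nat \<Rightarrow> 'a) \<Rightarrow> real"
  assumes "\<And>x y. (\<forall>i\<le>m. x i = y i) \<Longrightarrow> G x = G y"
  shows "G \<in> borel_measurable \<mu>"
proof (rule measurableI)
  fix B :: "real set"
  have "G -` B \<inter> space \<mu> = {x \<in> X. G x \<in> B}" using space_mu by auto
  also have "\<dots> \<in> sets \<mu>"
  proof (rule FC_set[of m])
    fix x y :: "nat \<Rightarrow> 'a" assume "\<forall>i\<le>m. x i = y i"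
    then have "G x = G y" by (rule assms)
    then show "(G x \<in> B) = (G y \<in> B)" by simp
  qed
  finally show "G -` B \<inter> space \<mu> \<in> sets \<mu>" .
qed auto

lemma phi_meas: "\<phi> \<in> borel_measurable \<mu>"
proof (rule borel_measurable_LIMSEQ_real)
  define \<sigma> where "\<sigma> m x = (SOME z. z \<in> X \<and> (\<forall>k\<le>m. z k = x k))" for m x
  show "(\<lambda>x. \<phi> (\<sigma> m x)) \<in> borel_measurable \<mu>" for m
  proof (rule FC_fun[of m])
    fix x y :: "nat \<Rightarrow> 'a" assume "\<forall>i\<le>m. x i = y i"
    then have "(\<lambda>z. z \<in> X \<and> (\<forall>k\<le>m. z k = x k)) = (\<lambda>z. z \<in> X \<and> (\<forall>k\<le>m. z k = y k))" by auto
    then show "\<phi> (\<sigma> m x) = \<phi> (\<sigma> m y)" by (simp add: \<sigma>_def)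
  qed
  fix x assume "x \<in> space \<mu>"
  then have x: "x \<in> X" using space_mu by simp
  have s: "\<sigma> m x \<in> X \<and> (\<forall>k\<le>m. \<sigma> m x k = x k)" for m
    unfolding \<sigma>_def by (rule someI[of _ x]) (simp add: x)
  have b: "norm (\<phi> (\<sigma> m x) - \<phi> x) \<le> Cphi * \<alpha> ^ Suc m" for m
  proof -
    have "\<forall>i<Suc m. \<sigma> m x i = x i" using s[of m] by (simp add: less_Suc_eq_le)
    from distortion[OF conjunct1[OF s[of m]] x this] show ?thesis by simp
  qed
  have "(\<lambda>m. \<alpha> ^ Suc m) \<longlonglongrightarrow> 0" using LIMSEQ_Suc[OF LIMSEQ_power_zero[of \<alpha>]] alpha0 alpha1 by simp
  then have "(\<lambda>m. Cphi * \<alpha> ^ Suc m) \<longlonglongrightarrow> Cphi * 0" by (intro tendsto_mult tendsto_const)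
  then have g0: "(\<lambda>m. Cphi * \<alpha> ^ Suc m) \<longlonglongrightarrow> 0" by simp
  have ev: "\<forall>\<^sub>F m in sequentially. norm (\<phi> (\<sigma> m x) - \<phi> x) \<le> Cphi * \<alpha> ^ Suc m"
    using b by simp
  have "(\<lambda>m. \<phi> (\<sigma> m x) - \<phi> x) \<longlonglongrightarrow> 0" by (rule Lim_null_comparison[OF ev g0])
  then have "(\<lambda>m. (\<phi> (\<sigma> m x) - \<phi> x) + \<phi> x) \<longlonglongrightarrow> 0 + \<phi> x" by (intro tendsto_add tendsto_const)
  then show "(\<lambda>m. \<phi> (\<sigma> m x)) \<longlonglongrightarrow> \<phi> x" by simp
qed

lemma cons_meas: "(\<lambda>x. case_nat a x) \<in> restrict_space \<mu> {x. A a (x 0)} \<rightarrow>\<^sub>M \<mu>"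
proof (rule measurable_sigma_sets[OF sets_mu])
  show "cylinder_sets A \<subseteq> Pow X" by (auto simp: cylinder_sets_def)
  show "(\<lambda>x. case_nat a x) \<in> space (restrict_space \<mu> {x. A a (x 0)}) \<rightarrow> X"
    by (auto simp: space_restrict_space space_mu sft_cons)
  fix Y assume "Y \<in> cylinder_sets A"
  then obtain m w where Y: "Y = {x \<in> X. \<forall>k\<le>m. x k = w k}" by (auto simp: cylinder_sets_def)
  have Om: "{x. A a (x 0)} \<inter> space \<mu> \<in> sets \<mu>"
  proof -
    have "{x. A a (x 0)} \<inter> space \<mu> = {x \<in> X. A a (x 0)}" using space_mu by auto
    also have "\<dots> \<in> sets \<mu>" by (rule FC_set[of 0]) auto
    finally show ?thesis .
  qed
  have eq: "(\<lambda>x. case_nat a x) -` Y \<inter> space (restrict_space \<mu> {x. A a (x 0)}) =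
      {x \<in> X. A a (x 0) \<and> (\<forall>k\<le>m. case_nat a x k = w k)}"
    by (auto simp: space_restrict_space space_mu Y sft_cons)
  have "{x \<in> X. A a (x 0) \<and> (\<forall>k\<le>m. case_nat a x k = w k)} \<in> sets \<mu>"
  proof (rule FC_set[of m])
    fix x y :: "nat \<Rightarrow> 'a" assume ag: "\<forall>i\<le>m. x i = y i"
    have "case_nat a x k = case_nat a y k" if "k \<le> m" for k
      using ag that by (cases k) auto
    then show "(A a (x 0) \<and> (\<forall>k\<le>m. case_nat a x k = w k)) = (A a (y 0) \<and> (\<forall>k\<le>m. case_nat a y k = w k))"
      using ag by auto
  qed
  then show "(\<lambda>x. case_nat a x) -` Y \<inter> space (restrict_space \<mu> {x. A a (x 0)}) \<in> sets (restrict_space \<mu> {x. A a (x 0)})"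
    unfolding eq by (subst sets_restrict_space_iff[OF Om]) auto
qed

lemma P_meas:
  assumes G: "G \<in> borel_measurable \<mu>"
  shows "P G \<in> borel_measurable \<mu>"
proof -
  define Sf where "Sf x = (\<Sum>a\<in>UNIV. if A a (x 0) then exp (\<phi> (case_nat a x)) * G (case_nat a x) else 0)" for x
  have E: "(\<lambda>y. exp (\<phi> y) * G y) \<in> borel_measurable \<mu>"
    by (rule borel_measurable_times[OF measurable_compose[OF phi_meas borel_measurable_exp] G])
  have "Sf \<in> borel_measurable \<mu>" unfolding Sf_def
  proof (rule borel_measurable_sum)
    fix a
    have S: "{x \<in> space \<mu>. A a (x 0)} \<in> sets \<mu>" unfolding space_mu by (rule FC_set[of 0]) auto
    show "(\<lambda>x. if A a (x 0) then exp (\<phi> (case_nat a x)) * G (case_nat a x) else 0) \<in> borel_measurable \<mu>"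
      unfolding measurable_If_restrict_space_iff[OF S]
      using measurable_comp[OF cons_meas E] by (simp add: o_def)
  qed
  moreover have "P G x = Sf x" if "x \<in> space \<mu>" for x
  proof -
    have x: "x \<in> X" using that space_mu by simp
    show ?thesis unfolding transfer_letters[OF x] Sf_def by (simp add: sum.If_cases)
  qed
  then have "P G \<in> borel_measurable \<mu> \<longleftrightarrow> Sf \<in> borel_measurable \<mu>" by (rule measurable_cong)
  ultimately show ?thesis by simp
qed


subsection \<open>Integrals\<close>

definition good :: "((nat \<Rightarrow> 'a) \<Rightarrow> real) \<Rightarrow> bool" where
  "good F \<longleftrightarrow> F \<in> borel_measurable \<mu> \<and> (\<exists>B. \<forall>x\<in>X. \<bar>F x\<bar> \<le> B)"

lemma good_P: "good F \<Longrightarrow> good (P F)"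
  unfolding good_def using P_meas P_abs_bound by blast

lemma good_Pn: "good F \<Longrightarrow> good ((P ^^ n) F)"
  by (induction n) (auto intro: good_P)

lemma good_const: "good (\<lambda>_. c)"
  unfolding good_def by (auto intro: exI[of _ "\<bar>c\<bar>"])

lemma good_add: "good F \<Longrightarrow> good G \<Longrightarrow> good (\<lambda>x. F x + G x)"
  unfolding good_def
proof (elim conjE exE, intro conjI)
  fix B1 B2 assume "\<forall>x\<in>X. \<bar>F x\<bar> \<le> B1" "\<forall>x\<in>X. \<bar>G x\<bar> \<le> B2"
  then show "\<exists>B. \<forall>x\<in>X. \<bar>F x + G x\<bar> \<le> B" by (intro exI[of _ "B1 + B2"]) (auto intro: abs_triangle_ineq[THEN order_trans] add_mono)
qed auto

lemma good_cmult: "good F \<Longrightarrow> good (\<lambda>x. c * F x)"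
  unfolding good_def
proof (elim conjE exE, intro conjI)
  fix B1 assume "\<forall>x\<in>X. \<bar>F x\<bar> \<le> B1"
  then show "\<exists>B. \<forall>x\<in>X. \<bar>c * F x\<bar> \<le> B" by (intro exI[of _ "\<bar>c\<bar> * B1"]) (auto simp: abs_mult intro: mult_left_mono)
qed auto

lemma good_diff: "good F \<Longrightarrow> good G \<Longrightarrow> good (\<lambda>x. F x - G x)"
  using good_add[of F "\<lambda>x. (-1) * G x"] good_cmult[of G "-1"] by simp

lemma good_integrable: "good F \<Longrightarrow> integrable \<mu> F"
  unfolding good_def
proof (elim conjE exE)
  fix B assume m: "F \<in> borel_measurable \<mu>" and b: "\<forall>x\<in>X. \<bar>F x\<bar> \<le> B"
  show "integrable \<mu> F"
    using prob_space.axioms(1)[OF prob] m b space_mu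
    by (intro finite_measure.integrable_const_bound[of \<mu> F B]) (auto intro: AE_I2)
qed

lemma int_const: "integral\<^sup>L \<mu> (\<lambda>_. c) = (c::real)"
  using prob_space.prob_space[OF prob] by simp

lemma P_int: "good F \<Longrightarrow> integral\<^sup>L \<mu> (P F) = integral\<^sup>L \<mu> F"
  using equilibrium unfolding equilibrium_state_def good_def bounded_iff by auto

lemma Pn_int: "good F \<Longrightarrow> integral\<^sup>L \<mu> ((P ^^ n) F) = integral\<^sup>L \<mu> F"
proof (induction n)
  case (Suc n) then show ?case using P_int[OF good_Pn[OF Suc.prems, of n]] by simp
qed simp

lemma int_le:
  assumes g: "good F" and b: "\<And>x. x \<in> X \<Longrightarrow> F x \<le> c"
  shows "integral\<^sup>L \<mu> F \<le> c"
proof -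
  have "AE x in \<mu>. F x \<le> c" using b space_mu by (intro AE_I2) auto
  then have "integral\<^sup>L \<mu> F \<le> integral\<^sup>L \<mu> (\<lambda>_. c)"
    by (intro integral_mono_AE good_integrable g good_const)
  then show ?thesis by (simp only: int_const)
qed

lemma int_ge:
  assumes g: "good F" and b: "\<And>x. x \<in> X \<Longrightarrow> c \<le> F x"
  shows "c \<le> integral\<^sup>L \<mu> F"
proof -
  have "AE x in \<mu>. c \<le> F x" using b space_mu by (intro AE_I2) auto
  then have "integral\<^sup>L \<mu> (\<lambda>_. c) \<le> integral\<^sup>L \<mu> F"
    by (intro integral_mono_AE good_integrable g good_const)
  then show ?thesis by (simp only: int_const)
qed

definition "N0 = (SOME N0. \<forall>n\<ge>N0. \<forall>x\<in>X. \<forall>z\<in>X. \<exists>y\<in>X. (shift ^^ n) y = x \<and> y 0 = z 0)"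

lemma N0_prop: "n \<ge> N0 \<Longrightarrow> x \<in> X \<Longrightarrow> z \<in> X \<Longrightarrow> \<exists>y\<in>X. (shift ^^ n) y = x \<and> y 0 = z 0"
  using someI_ex[OF mix_pre] unfolding N0_def by blast

lemma doeblin_lower:
  assumes R: "RegS F E 1" and n: "n \<ge> N0" and x: "x \<in> X" and z: "z \<in> X"
  shows "exp (- (real n * Phi + E * \<alpha>)) * F z \<le> (P ^^ n) F x"
proof -
  obtain y where y: "y \<in> X" "(shift ^^ n) y = x" "y 0 = z 0" using N0_prop[OF n x z] by blast
  have nn: "\<And>w. w \<in> X \<Longrightarrow> 0 \<le> F w" using R by (simp add: RegS_def)
  have "F z \<le> F y * exp (E * \<alpha> ^ 1)" using R z y unfolding RegS_def by auto
  then have "exp (- (E * \<alpha>)) * F z \<le> exp (- (E * \<alpha>)) * (F y * exp (E * \<alpha>))"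
    by (intro mult_left_mono) auto
  also have "\<dots> = F y" by (simp add: exp_minus_inverse mult.commute mult.left_commute)
  finally have "exp (- (E * \<alpha>)) * F z \<le> F y" .
  then have "exp (- (real n * Phi)) * (exp (- (E * \<alpha>)) * F z) \<le> exp (- (real n * Phi)) * F y"
    by (intro mult_left_mono) auto
  also have "\<dots> \<le> (P ^^ n) F x" using Pn_lower[OF nn y(1), where n=n] y(2) by simp
  finally show ?thesis by (simp add: exp_add[symmetric] algebra_simps exp_diff)
qed

lemma sup_by_int:
  assumes R: "RegS F E 1" and g: "good F" and y: "y \<in> X"
  shows "F y \<le> exp (real N0 * Phi + E * \<alpha>) * integral\<^sup>L \<mu> F"
proof -
  have "exp (- (real N0 * Phi + E * \<alpha>)) * F y \<le> integral\<^sup>L \<mu> ((P ^^ N0) F)"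
    by (rule int_ge[OF good_Pn[OF g]]) (rule doeblin_lower[OF R _ _ y], auto)
  then have i: "exp (- (real N0 * Phi + E * \<alpha>)) * F y \<le> integral\<^sup>L \<mu> F" using Pn_int[OF g] by simp
  from mult_left_mono[OF i, of "exp (real N0 * Phi + E * \<alpha>)"] have "exp (real N0 * Phi + E * \<alpha>) * (exp (- (real N0 * Phi + E * \<alpha>)) * F y) \<le> exp (real N0 * Phi + E * \<alpha>) * integral\<^sup>L \<mu> F"
    by simp
  moreover have e: "exp r * (exp (- r) * v) = v" for r v :: real by (simp add: exp_minus_inverse mult.assoc[symmetric])
  ultimately show ?thesis by (simp only: e)
qed


subsection \<open>Doeblin iteration\<close>

lemma ev_small: "\<exists>n. \<forall>m\<ge>n. \<alpha> ^ m < 1/4"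
proof -
  have "(\<lambda>m. \<alpha> ^ m) \<longlonglongrightarrow> 0" using LIMSEQ_power_zero[of \<alpha>] alpha0 alpha1 by simp
  then have "\<forall>\<^sub>F m in sequentially. \<alpha> ^ m < 1/4" by (rule order_tendstoD(2)) simp
  then show ?thesis by (simp add: eventually_sequentially)
qed

definition "n0 = (SOME n. \<forall>m\<ge>n. \<alpha> ^ m < 1/4)"
definition "N = N0 + n0 + 1"
definition "DD = 4 * D0 + 1"
definition "dl = exp (- (real N * Phi + DD * \<alpha>))"
definition "q = 1 - dl / 2"
definition "T G = (\<lambda>x. (P ^^ N) G x - dl / 2 * integral\<^sup>L \<mu> G)"

lemma N_ge: "N0 \<le> N" "1 \<le> N" by (auto simp: N_def)
lemma alpha_N: "\<alpha> ^ N \<le> 1/4"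
  using someI_ex[OF ev_small] unfolding n0_def[symmetric] N_def by (meson le_add2 less_imp_le add_leD2 order_refl le_add1 add_leE)
lemma DD_pos: "0 < DD" using D0_nonneg by (simp add: DD_def)
lemma dl_pos: "0 < dl" by (simp add: dl_def)
lemma dl_le1: "dl \<le> 1"
proof -
  have "0 \<le> real N * Phi + DD * \<alpha>" using Phi0 DD_pos alpha0 by (intro add_nonneg_nonneg mult_nonneg_nonneg) auto
  then show ?thesis by (simp add: dl_def)
qed
lemma q_pos: "0 < q" "q < 1" using dl_pos dl_le1 by (auto simp: q_def)

lemma T_step:
  assumes g: "good G" and R: "RegS G DD 1"
  shows "good (T G) \<and> RegS (T G) DD 1 \<and> integral\<^sup>L \<mu> (T G) = q * integral\<^sup>L \<mu> G"
proof (intro conjI)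
  define m where "m = integral\<^sup>L \<mu> G"
  have Gnn: "\<And>y. y \<in> X \<Longrightarrow> 0 \<le> G y" using R by (simp add: RegS_def)
  have m0: "0 \<le> m" unfolding m_def by (rule int_ge[OF g Gnn])
  show gT: "good (T G)" unfolding T_def by (intro good_diff good_Pn g good_const)
  show "integral\<^sup>L \<mu> (T G) = q * integral\<^sup>L \<mu> G"
  proof -
    have "integral\<^sup>L \<mu> (T G) = integral\<^sup>L \<mu> ((P ^^ N) G) - integral\<^sup>L \<mu> (\<lambda>_. dl / 2 * m)"
      unfolding T_def m_def by (rule Bochner_Integration.integral_diff[OF good_integrable[OF good_Pn[OF g]] good_integrable[OF good_const]])
    then show ?thesis unfolding int_const Pn_int[OF g] m_def by (simp add: q_def algebra_simps)
  qed
  have R1: "RegS ((P ^^ N) G) (\<alpha> ^ N * DD + D0) 1"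
    using R by (intro RegS_Pn) (auto intro: RegS_mono)
  have "\<alpha> ^ N * DD \<le> 1/4 * DD" using alpha_N DD_pos by (intro mult_right_mono) auto
  then have "\<alpha> ^ N * DD + D0 \<le> DD / 2" by (simp add: DD_def)
  then have R2: "RegS ((P ^^ N) G) (DD / 2) 1" using R1 by (rule RegS_mono[rotated 2]) simp
  have low: "dl * m \<le> (P ^^ N) G z" if z: "z \<in> X" for z
  proof -
    have "G y \<le> (P ^^ N) G z / dl" if y: "y \<in> X" for y
      using doeblin_lower[OF R N_ge(1) z y] dl_pos by (simp add: dl_def field_simps)
    then have "m \<le> (P ^^ N) G z / dl" unfolding m_def by (rule int_le[OF g])
    then show ?thesis using dl_pos by (simp add: field_simps)
  qed
  show "RegS (T G) DD 1" unfolding RegS_def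
  proof (intro conjI ballI allI impI)
    fix y assume y: "y \<in> X"
    have "0 \<le> dl * m" using dl_pos m0 by simp
    then show "0 \<le> T G y" unfolding T_def m_def[symmetric] using low[OF y] by linarith
  next
    fix r y z assume r: "1 \<le> r" and y: "y \<in> X" and z: "z \<in> X" and ag: "\<forall>i<r. y i = z i"
    have a: "(P ^^ N) G y \<le> (P ^^ N) G z * exp (DD * \<alpha> ^ r / 2)"
      using R2 r y z ag unfolding RegS_def by auto
    have "0 \<le> DD * \<alpha> ^ r" using DD_pos alpha0 by simp
    from key_ineq[OF less_imp_le[OF dl_pos] m0 this a low[OF z]]
    show "T G y \<le> T G z * exp (DD * \<alpha> ^ r)" unfolding T_def m_def by simp
  qed
qed

lemma T_iter:
  assumes g: "good F" and R: "RegS F DD 1"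
  shows "good ((T ^^ j) F) \<and> RegS ((T ^^ j) F) DD 1 \<and> integral\<^sup>L \<mu> ((T ^^ j) F) = q ^ j * integral\<^sup>L \<mu> F \<and>
    (\<forall>x\<in>X. (P ^^ (j * N)) F x = (T ^^ j) F x + (1 - q ^ j) * integral\<^sup>L \<mu> F)"
proof (induction j)
  case 0 then show ?case using g R by simp
next
  case (Suc j)
  define Tj where "Tj = (T ^^ j) F"
  define m where "m = integral\<^sup>L \<mu> F"
  have IH: "good Tj" "RegS Tj DD 1" "integral\<^sup>L \<mu> Tj = q ^ j * m"
    "\<And>x. x \<in> X \<Longrightarrow> (P ^^ (j * N)) F x = Tj x + (1 - q ^ j) * m"
    using Suc unfolding Tj_def m_def by auto
  note S = T_step[OF IH(1,2)]
  have TS: "(T ^^ Suc j) F = T Tj" by (simp add: Tj_def)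
  have "(P ^^ (Suc j * N)) F x = (T ^^ Suc j) F x + (1 - q ^ Suc j) * m" if x: "x \<in> X" for x
  proof -
    have "(P ^^ (Suc j * N)) F x = (P ^^ N) ((P ^^ (j * N)) F) x" by (simp add: funpow_add)
    also have "\<dots> = (P ^^ N) (\<lambda>y. Tj y + (1 - q ^ j) * m) x" by (rule Pn_cong[OF IH(4) x])
    also have "\<dots> = (P ^^ N) Tj x + (1 - q ^ j) * m" by (simp add: Pn_add Pn_const[OF x])
    also have "\<dots> = T Tj x + dl / 2 * (q ^ j * m) + (1 - q ^ j) * m" by (simp add: T_def IH(3))
    also have "\<dots> = (T ^^ Suc j) F x + (1 - q ^ Suc j) * m" unfolding TS by (simp add: q_def algebra_simps)
    finally show ?thesis .
  qed
  then show ?case using S IH(3) TS unfolding m_def by simp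
qed

lemma decay_F:
  assumes g: "good F" and R: "RegS F DD 1" and x: "x \<in> X"
  shows "\<bar>(P ^^ (j * N)) F x - integral\<^sup>L \<mu> F\<bar> \<le> (exp (real N0 * Phi + DD * \<alpha>) + 1) * q ^ j * integral\<^sup>L \<mu> F"
proof -
  note I = T_iter[OF g R, of j]
  define m where "m = integral\<^sup>L \<mu> F"
  have m0: "0 \<le> m" unfolding m_def using R by (intro int_ge[OF g]) (simp add: RegS_def)
  have t0: "0 \<le> (T ^^ j) F x" using I x by (simp add: RegS_def)
  have t1: "(T ^^ j) F x \<le> exp (real N0 * Phi + DD * \<alpha>) * (q ^ j * m)"
    using sup_by_int[of "(T ^^ j) F" DD x] I x unfolding m_def by simp
  have q0: "0 \<le> q ^ j * m" using q_pos m0 by simp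
  have e: "(P ^^ (j * N)) F x = (T ^^ j) F x + (1 - q ^ j) * m" using I x unfolding m_def by blast
  have "\<bar>(P ^^ (j * N)) F x - m\<bar> = \<bar>(T ^^ j) F x - q ^ j * m\<bar>" unfolding e by (simp add: algebra_simps)
  also have "\<dots> \<le> (T ^^ j) F x + q ^ j * m" using t0 q0 by simp
  also have "\<dots> \<le> (exp (real N0 * Phi + DD * \<alpha>) + 1) * q ^ j * m" using t1 by (simp add: algebra_simps)
  finally show ?thesis unfolding m_def .
qed


lemma decay_h:
  fixes h0 :: "'a \<Rightarrow> int"
  assumes cen: "integral\<^sup>L \<mu> (\<lambda>x. real_of_int (h0 (x 0))) = 0"
  shows "\<exists>Kd \<rho>. 0 < \<rho> \<and> \<rho> < 1 \<and> 0 \<le> Kd \<and>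
    (\<forall>n. \<forall>x\<in>X. \<bar>(P ^^ n) (\<lambda>x. real_of_int (h0 (x 0))) x\<bar> \<le> Kd * \<rho> ^ n)"
proof -
  define h where "h = (\<lambda>x::nat \<Rightarrow> 'a. real_of_int (h0 (x 0)))"
  define Hb where "Hb = (\<Sum>a\<in>UNIV. \<bar>real_of_int (h0 a)\<bar>)"
  define c0 where "c0 = Hb + 1"
  define F where "F = (\<lambda>x. h x + c0)"
  define K3 where "K3 = exp (real N0 * Phi + DD * \<alpha>) + 1"
  have hb: "\<bar>h x\<bar> \<le> Hb" for x unfolding h_def Hb_def by (rule member_le_sum) auto
  have gh: "good h" unfolding good_def
  proof
    show "h \<in> borel_measurable \<mu>" by (rule FC_fun[of 0]) (simp add: h_def)
    show "\<exists>B. \<forall>x\<in>X. \<bar>h x\<bar> \<le> B" using hb by blast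
  qed
  have gF: "good F" unfolding F_def by (intro good_add gh good_const)
  have Fpos: "0 \<le> F x" for x using hb[of x] unfolding F_def c0_def by (simp add: abs_le_iff)
  have RF: "RegS F DD 1" unfolding RegS_def
  proof (intro conjI ballI allI impI)
    fix r y z assume r: "1 \<le> r" and "y \<in> X" "z \<in> X" and ag: "\<forall>i<r. y i = z i"
    then have "y 0 = z 0" by auto
    then have "F y = F z" by (simp add: F_def h_def)
    moreover have "1 \<le> exp (DD * \<alpha> ^ r)" using DD_pos alpha0 by simp
    ultimately show "F y \<le> F z * exp (DD * \<alpha> ^ r)" using Fpos[of z] by (simp add: mult_le_cancel_left1)
  qed (rule Fpos)
  have iF: "integral\<^sup>L \<mu> F = c0"
    unfolding F_def using Bochner_Integration.integral_add[OF good_integrable[OF gh] good_integrable[OF good_const], of c0]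
      cen int_const by (simp add: h_def)
  have c00: "0 \<le> c0" unfolding c0_def Hb_def by (simp add: sum_nonneg add_nonneg_nonneg)
  have K30: "0 \<le> K3" unfolding K3_def by (simp add: add_nonneg_nonneg)
  have bj: "\<bar>(P ^^ (j * N)) h x\<bar> \<le> K3 * q ^ j * c0" if x: "x \<in> X" for j x
  proof -
    have "(P ^^ (j * N)) F x = (P ^^ (j * N)) h x + c0" unfolding F_def by (simp add: Pn_add Pn_const[OF x])
    then show ?thesis using decay_F[OF gF RF x, of j] iF unfolding K3_def by simp
  qed
  define \<rho> where "\<rho> = root N q"
  have N0: "0 < N" using N_ge(2) by simp
  have rho0: "0 < \<rho>" unfolding \<rho>_def using q_pos N0 by (simp add: real_root_gt_zero)
  have rho1: "\<rho> < 1" unfolding \<rho>_def using q_pos N0 real_root_less_mono[OF N0, of q 1] by simp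
  have rhoN: "\<rho> ^ N = q" unfolding \<rho>_def using q_pos N0 by (simp add: real_root_pow_pos)
  have qle: "q ^ (n div N) \<le> \<rho> ^ n / q" for n
  proof -
    have "\<rho> ^ n = \<rho> ^ (n div N * N + n mod N)" by simp
    also have "\<dots> = (\<rho> ^ N) ^ (n div N) * \<rho> ^ (n mod N)"
      by (simp only: power_add mult.commute[of "n div N" N] power_mult)
    finally have e: "\<rho> ^ n = q ^ (n div N) * \<rho> ^ (n mod N)" unfolding rhoN .
    have "\<rho> ^ N \<le> \<rho> ^ (n mod N)" using rho0 rho1 N0 by (intro power_decreasing) (auto intro: less_imp_le)
    then have "q ^ (n div N) * q \<le> \<rho> ^ n" unfolding e rhoN using q_pos by (intro mult_left_mono) auto
    then show ?thesis using q_pos by (simp add: field_simps)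
  qed
  show ?thesis
  proof (intro exI conjI allI ballI)
    show "0 < \<rho>" "\<rho> < 1" by (fact rho0, fact rho1)
    show "0 \<le> K3 * c0 / q" using K30 c00 q_pos by simp
    fix n x assume x: "x \<in> X"
    have split: "(P ^^ n) h = (P ^^ (n mod N)) ((P ^^ (n div N * N)) h)"
      using Pn_add_iter[of "n mod N" "n div N * N" h] by (simp add: mod_div_mult_eq)
    have "\<bar>(P ^^ n) h x\<bar> \<le> K3 * q ^ (n div N) * c0" unfolding split
      by (rule Pn_abs_bound[OF bj x])
    also have "\<dots> \<le> K3 * (\<rho> ^ n / q) * c0" using K30 c00 qle[of n] by (intro mult_right_mono mult_left_mono) auto
    finally show "\<bar>(P ^^ n) (\<lambda>x. real_of_int (h0 (x 0))) x\<bar> \<le> K3 * c0 / q * \<rho> ^ n" unfolding h_def by (simp add: field_simps)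
  qed
qed

end

lemma exp_quad:
  fixes s :: real
  assumes "\<bar>s\<bar> \<le> 1"
  shows "exp s \<le> 1 + s + s\<^sup>2"
proof (cases "0 \<le> s")
  case True then show ?thesis using assms exp_bound[of s] by simp
next
  case False
  define v where "v = - s"
  have v: "0 < v" "v \<le> 1" using False assms by (auto simp: v_def)
  have "1 + v \<le> exp v" by (rule exp_ge_add_one_self)
  then have "exp s \<le> 1 / (1 + v)" using v by (simp add: v_def exp_minus field_simps)
  also have "\<dots> \<le> 1 - v + v\<^sup>2"
  proof -
    have "1 \<le> (1 + v) * (1 - v + v\<^sup>2)" using v by (simp add: algebra_simps power2_eq_square power3_eq_cube)
    then show ?thesis using v by (simp add: field_simps)
  qed
  finally show ?thesis by (simp add: v_def)
qed

locale sys3 = sys2 A \<phi> \<mu> \<theta> Cphi \<beta> for A :: "'a::finite \<Rightarrow> 'a \<Rightarrow> bool" and \<phi> \<mu> \<theta> Cphi \<beta> +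
  fixes h0 :: "'a \<Rightarrow> int" and Kd \<rho> :: real
  assumes rho0: "0 < \<rho>" and rho1: "\<rho> < 1" and Kd0: "0 \<le> Kd"
    and decay: "\<And>n x. x \<in> sft A \<Longrightarrow> \<bar>(P ^^ n) (\<lambda>x. real_of_int (h0 (x 0))) x\<bar> \<le> Kd * \<rho> ^ n"
begin

definition "hf x = real_of_int (h0 (x 0))"
definition "Hb = (\<Sum>a\<in>UNIV. \<bar>real_of_int (h0 a)\<bar>)"
definition "U = Kd / (1 - \<rho>)"
definition "B = Hb + 2 * U + 1"
definition "uf k x = (\<Sum>n<k. (P ^^ Suc n) hf x)"
definition "gf k x = hf x + uf k x - uf k (shift x)"
definition "gk k j y = (\<Sum>i<j. gf k ((shift ^^ i) y))"
definition "Rop k t F = (\<lambda>x. P (\<lambda>y. exp (t * gf k y) * F y) x)"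
definition "Lam k t = exp (t * Kd * \<rho> ^ Suc k + t\<^sup>2 * B\<^sup>2)"

lemma hf_bound: "\<bar>hf x\<bar> \<le> Hb" unfolding hf_def Hb_def by (rule member_le_sum) auto
lemma Hb0: "0 \<le> Hb" unfolding Hb_def by (simp add: sum_nonneg)
lemma U0: "0 \<le> U" using Kd0 rho1 by (simp add: U_def)
lemma B1: "1 \<le> B" using Hb0 U0 by (simp add: B_def)

lemma uf_bound: "x \<in> X \<Longrightarrow> \<bar>uf k x\<bar> \<le> U"
proof -
  assume x: "x \<in> X"
  have "\<bar>uf k x\<bar> \<le> (\<Sum>n<k. \<bar>(P ^^ Suc n) hf x\<bar>)" unfolding uf_def by (rule sum_abs)
  also have "\<dots> \<le> (\<Sum>n<k. Kd * \<rho> ^ n)"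
  proof (rule sum_mono)
    fix n
    have "\<bar>(P ^^ Suc n) hf x\<bar> \<le> Kd * \<rho> ^ Suc n" using decay[OF x, of "Suc n"] unfolding hf_def by simp
    also have "\<dots> \<le> Kd * \<rho> ^ n" using Kd0 rho0 rho1 by (intro mult_left_mono) (auto intro: power_decreasing)
    finally show "\<bar>(P ^^ Suc n) hf x\<bar> \<le> Kd * \<rho> ^ n" .
  qed
  also have "\<dots> = Kd * (1 - \<rho> ^ k) / (1 - \<rho>)" using rho1 by (simp add: sum_distrib_left[symmetric] sum_gp_strict)
  also have "\<dots> \<le> U" unfolding U_def using Kd0 rho0 rho1
    by (intro divide_right_mono) (auto intro!: mult_left_le simp: zero_le_power)
  finally show ?thesis .
qed

lemma gf_bound: "x \<in> X \<Longrightarrow> \<bar>gf k x\<bar> \<le> B"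
proof -
  assume x: "x \<in> X"
  have "\<bar>gf k x\<bar> \<le> \<bar>hf x\<bar> + \<bar>uf k x\<bar> + \<bar>uf k (shift x)\<bar>" unfolding gf_def by linarith
  then show ?thesis using hf_bound[of x] uf_bound[OF x, of k] uf_bound[OF sft_shift[OF x], of k] by (simp add: B_def)
qed

lemma P_gf: "x \<in> X \<Longrightarrow> P (gf k) x = (P ^^ Suc k) hf x"
proof -
  assume x: "x \<in> X"
  have a: "P (\<lambda>y. uf k (shift y)) x = uf k x"
    using P_mult_shift[of "\<lambda>_. 1" "uf k" x] P_const[OF x, of 1] by simp
  have b: "P (uf k) x = (\<Sum>n<k. (P ^^ Suc (Suc n)) hf x)"
    unfolding uf_def by (simp add: P_sum)
  have "P (gf k) x = P hf x + P (uf k) x - P (\<lambda>y. uf k (shift y)) x"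
    unfolding gf_def by (simp add: P_add P_diff)
  also have "\<dots> = (\<Sum>n<Suc k. (P ^^ Suc n) hf x) - uf k x" unfolding a b
    by (subst sum.lessThan_Suc_shift) simp
  also have "\<dots> = (P ^^ Suc k) hf x" unfolding uf_def by simp
  finally show ?thesis .
qed

lemma P_exp:
  assumes x: "x \<in> X" and t: "0 \<le> t" "t * B \<le> 1"
  shows "P (\<lambda>y. exp (t * gf k y)) x \<le> Lam k t"
proof -
  have tg: "\<bar>t * gf k y\<bar> \<le> 1" if "y \<in> X" for y
  proof -
    have "\<bar>t * gf k y\<bar> = t * \<bar>gf k y\<bar>" using t by (simp add: abs_mult)
    also have "\<dots> \<le> t * B" using gf_bound[OF that] t by (intro mult_left_mono) auto
    finally show ?thesis using t by simp
  qed
  have sq: "(t * gf k y)\<^sup>2 \<le> t\<^sup>2 * B\<^sup>2" if "y \<in> X" for y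
  proof -
    have "\<bar>t * gf k y\<bar> \<le> t * B" using gf_bound[OF that] t by (simp add: abs_mult mult_left_mono)
    then have "\<bar>t * gf k y\<bar>\<^sup>2 \<le> (t * B)\<^sup>2" by (intro power_mono) auto
    then show ?thesis by (simp add: power_mult_distrib)
  qed
  have "P (\<lambda>y. exp (t * gf k y)) x \<le> P (\<lambda>y. 1 + t * gf k y + (t * gf k y)\<^sup>2) x"
    by (rule P_mono) (rule exp_quad[OF tg])
  also have "\<dots> = 1 + t * P (gf k) x + P (\<lambda>y. (t * gf k y)\<^sup>2) x"
    by (simp add: P_add P_cmult P_const[OF x])
  also have "P (\<lambda>y. (t * gf k y)\<^sup>2) x \<le> P (\<lambda>_. t\<^sup>2 * B\<^sup>2) x" by (rule P_mono) (rule sq)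
  also have "P (\<lambda>_. t\<^sup>2 * B\<^sup>2) x = t\<^sup>2 * B\<^sup>2" by (rule P_const[OF x])
  also have "t * P (gf k) x \<le> t * (Kd * \<rho> ^ Suc k)"
  proof -
    have "P (gf k) x \<le> Kd * \<rho> ^ Suc k" using P_gf[OF x, of k] decay[OF x, of "Suc k"] unfolding hf_def by simp
    then show ?thesis using t by (intro mult_left_mono) auto
  qed
  also have "1 + t * (Kd * \<rho> ^ Suc k) + t\<^sup>2 * B\<^sup>2 \<le> Lam k t"
    unfolding Lam_def using exp_ge_add_one_self[of "t * Kd * \<rho> ^ Suc k + t\<^sup>2 * B\<^sup>2"] by (simp add: algebra_simps)
  finally show ?thesis by simp
qed


lemma gk_Suc: "gk k (Suc j) y = gk k j y + gf k ((shift ^^ j) y)"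
  by (simp add: gk_def)

lemma R_closed: "(Rop k t ^^ j) F = (P ^^ j) (\<lambda>y. exp (t * gk k j y) * F y)"
proof (induction j)
  case 0 then show ?case by (simp add: gk_def)
next
  case (Suc j)
  have "(P ^^ Suc j) (\<lambda>y. exp (t * gk k (Suc j) y) * F y)
      = P ((P ^^ j) (\<lambda>y. (exp (t * gk k j y) * F y) * (\<lambda>z. exp (t * gf k z)) ((shift ^^ j) y)))"
    by (simp add: gk_Suc distrib_left exp_add algebra_simps)
  also have "\<dots> = P (\<lambda>x. exp (t * gf k x) * (P ^^ j) (\<lambda>y. exp (t * gk k j y) * F y) x)"
    using Pn_mult_shift[of j "\<lambda>y. exp (t * gk k j y) * F y" "\<lambda>z. exp (t * gf k z)"] by simp
  also have "\<dots> = Rop k t ((Rop k t ^^ j) F)" unfolding Suc.IH Rop_def ..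
  finally show ?case by simp
qed

lemma R_sup:
  assumes t: "0 \<le> t" "t * B \<le> 1" and F: "\<And>y. y \<in> X \<Longrightarrow> 0 \<le> F y \<and> F y \<le> S"
  shows "x \<in> X \<Longrightarrow> 0 \<le> (Rop k t ^^ i) F x \<and> (Rop k t ^^ i) F x \<le> S * Lam k t ^ i"
proof (induction i arbitrary: x)
  case 0 then show ?case using F by simp
next
  case (Suc i)
  define G where "G = (Rop k t ^^ i) F"
  have G: "\<And>y. y \<in> X \<Longrightarrow> 0 \<le> G y \<and> G y \<le> S * Lam k t ^ i" using Suc.IH unfolding G_def by blast
  have "(Rop k t ^^ Suc i) F x = P (\<lambda>y. exp (t * gf k y) * G y) x" by (simp add: G_def Rop_def)
  moreover have "0 \<le> P (\<lambda>y. exp (t * gf k y) * G y) x" using G by (intro P_nonneg) simp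
  moreover have "P (\<lambda>y. exp (t * gf k y) * G y) x \<le> P (\<lambda>y. (S * Lam k t ^ i) * exp (t * gf k y)) x"
    using G by (intro P_mono) (simp add: mult.commute mult_left_mono)
  moreover have "P (\<lambda>y. (S * Lam k t ^ i) * exp (t * gf k y)) x \<le> (S * Lam k t ^ i) * Lam k t"
  proof -
    have "0 \<le> S * Lam k t ^ i" using G[OF Suc.prems] by linarith
    then show ?thesis unfolding P_cmult using P_exp[OF Suc.prems t] by (intro mult_left_mono) auto
  qed
  ultimately show ?case by (simp add: algebra_simps)
qed

lemma R_le_P:
  assumes t: "0 \<le> t" and F: "\<And>y. y \<in> X \<Longrightarrow> 0 \<le> F y"
  shows "x \<in> X \<Longrightarrow> (Rop k t ^^ j) F x \<le> exp (t * B) ^ j * (P ^^ j) F x"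
proof (induction j arbitrary: x)
  case 0 then show ?case by simp
next
  case (Suc j)
  define G where "G = (Rop k t ^^ j) F"
  have G0: "\<And>y. y \<in> X \<Longrightarrow> 0 \<le> G y"
  proof -
    fix y assume y: "y \<in> X"
    show "0 \<le> G y" unfolding G_def R_closed using F y by (intro Pn_nonneg) auto
  qed
  have "(Rop k t ^^ Suc j) F x = P (\<lambda>y. exp (t * gf k y) * G y) x" by (simp add: G_def Rop_def)
  also have "\<dots> \<le> P (\<lambda>y. exp (t * B) * (exp (t * B) ^ j * (P ^^ j) F y)) x"
  proof (rule P_mono)
    fix y assume y: "y \<in> X"
    have "exp (t * gf k y) \<le> exp (t * B)" using gf_bound[OF y, of k] t by (auto intro: mult_left_mono)
    moreover have "G y \<le> exp (t * B) ^ j * (P ^^ j) F y" using Suc.IH[OF y] unfolding G_def .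
    ultimately show "exp (t * gf k y) * G y \<le> exp (t * B) * (exp (t * B) ^ j * (P ^^ j) F y)"
      using G0[OF y] by (intro mult_mono) auto
  qed
  also have "\<dots> = exp (t * B) ^ Suc j * (P ^^ Suc j) F x" by (simp add: P_cmult)
  finally show ?case .
qed

lemma birk_le:
  assumes y: "y \<in> X"
  shows "real_of_int (birkhoff (\<lambda>x. h0 (x 0)) k y) \<le> gk k k y + 2 * U"
proof -
  have "gk k k y = (\<Sum>j<k. hf ((shift ^^ j) y)) + (\<Sum>j<k. uf k ((shift ^^ j) y) - uf k ((shift ^^ Suc j) y))"
    unfolding gk_def gf_def sum.distrib[symmetric] by (simp add: algebra_simps)
  also have "(\<Sum>j<k. uf k ((shift ^^ j) y) - uf k ((shift ^^ Suc j) y)) = uf k y - uf k ((shift ^^ k) y)"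
    using sum_lessThan_telescope'[of "\<lambda>j. uf k ((shift ^^ j) y)" k] by simp
  finally have e: "gk k k y = real_of_int (birkhoff (\<lambda>x. h0 (x 0)) k y) + (uf k y - uf k ((shift ^^ k) y))"
    by (simp add: birkhoff_def hf_def)
  show ?thesis using e uf_bound[OF y, of k] uf_bound[OF sft_funpow_shift[OF y], of k k] by (simp add: abs_le_iff)
qed


lemma H_gibbs:
  fixes H :: "(nat \<Rightarrow> 'a) \<Rightarrow> real"
  assumes c: "0 < c" and Hm: "H \<in> borel_measurable \<mu>"
    and Hc: "\<forall>y\<in>X. \<forall>z\<in>X. same_cylinder M y z \<longrightarrow> \<bar>H y\<bar> \<le> \<bar>H z\<bar> * exp (c * (1 / \<theta>) ^ M * dtheta \<theta> y z)"
  shows "good (\<lambda>y. \<bar>H y\<bar>) \<and> (\<forall>x\<in>X. (P ^^ M) (\<lambda>y. \<bar>H y\<bar>) x \<le> exp (real N0 * Phi + (c + D0) * \<alpha>) * integral\<^sup>L \<mu> (\<lambda>y. \<bar>H y\<bar>))"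
proof -
  define rep where "rep v = (SOME z. z \<in> X \<and> (\<forall>k\<le>M. z k = v k))" for v :: "nat \<Rightarrow> 'a"
  define SS where "SS = rep ` ({..M} \<rightarrow>\<^sub>E (UNIV :: 'a set))"
  have finSS: "finite SS" unfolding SS_def by (intro finite_imageI finite_PiE) auto
  have cM: "0 \<le> c * (1 / \<theta>) ^ M" using c th0 by simp
  have bnd: "\<bar>H y\<bar> \<le> exp (c * (1 / \<theta>) ^ M) * (\<Sum>w\<in>SS. \<bar>H w\<bar>)" if y: "y \<in> X" for y
  proof -
    define z where "z = rep (restrict y {..M})"
    have z: "z \<in> X \<and> (\<forall>k\<le>M. z k = restrict y {..M} k)"
      unfolding z_def rep_def by (rule someI[of _ y]) (simp add: y)
    have "restrict y {..M} \<in> {..M} \<rightarrow>\<^sub>E (UNIV :: 'a set)" by simp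
    then have zS: "z \<in> SS" unfolding SS_def z_def by (rule imageI)
    have sc: "same_cylinder M y z" using z by (simp add: same_cylinder_def)
    have d1: "dtheta \<theta> y z \<le> 1" using dtheta_le[of \<theta> 0 y z] th0 th1 by simp
    have "\<bar>H y\<bar> \<le> \<bar>H z\<bar> * exp (c * (1 / \<theta>) ^ M * dtheta \<theta> y z)" using Hc y z sc by blast
    also have "\<dots> \<le> \<bar>H z\<bar> * exp (c * (1 / \<theta>) ^ M)"
      using d1 cM by (intro mult_left_mono) (auto intro: mult_left_le)
    also have "\<dots> \<le> (\<Sum>w\<in>SS. \<bar>H w\<bar>) * exp (c * (1 / \<theta>) ^ M)"
      by (intro mult_right_mono member_le_sum finSS zS) auto
    finally show ?thesis by (simp add: mult.commute)
  qed
  have g: "good (\<lambda>y. \<bar>H y\<bar>)" unfolding good_def using Hm bnd by auto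
  have R: "RegS (\<lambda>y. \<bar>H y\<bar>) (c / \<alpha> ^ M) (1 + M)" unfolding RegS_def
  proof (intro conjI ballI allI impI)
    fix r y z assume r: "1 + M \<le> r" and y: "y \<in> X" and z: "z \<in> X" and ag: "\<forall>i<r. y i = z i"
    have sc: "same_cylinder M y z" using ag r by (simp add: same_cylinder_def)
    have dt: "dtheta \<theta> y z \<le> \<theta> ^ r" using dtheta_le[of \<theta> r y z] th0 th1 ag by simp
    have rM: "r = M + (r - M)" using r by simp
    have "c * (1 / \<theta>) ^ M * dtheta \<theta> y z \<le> c * (1 / \<theta>) ^ M * \<theta> ^ r"
      using dt cM by (intro mult_left_mono) auto
    also have "\<dots> = c * \<theta> ^ (r - M)" using th0 by (subst rM) (simp add: power_add field_simps)
    also have "\<dots> \<le> c * \<alpha> ^ (r - M)" using c th0 theta_le_alpha by (intro mult_left_mono power_mono) auto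
    also have "\<dots> = c / \<alpha> ^ M * \<alpha> ^ r" using alpha0 by (subst (2) rM) (simp add: power_add field_simps)
    finally have "exp (c * (1 / \<theta>) ^ M * dtheta \<theta> y z) \<le> exp (c / \<alpha> ^ M * \<alpha> ^ r)" by simp
    then have "\<bar>H z\<bar> * exp (c * (1 / \<theta>) ^ M * dtheta \<theta> y z) \<le> \<bar>H z\<bar> * exp (c / \<alpha> ^ M * \<alpha> ^ r)"
      by (intro mult_left_mono) auto
    moreover have "\<bar>H y\<bar> \<le> \<bar>H z\<bar> * exp (c * (1 / \<theta>) ^ M * dtheta \<theta> y z)" using Hc y z sc by blast
    ultimately show "\<bar>H y\<bar> \<le> \<bar>H z\<bar> * exp (c / \<alpha> ^ M * \<alpha> ^ r)" by linarith
  qed simp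
  have R2: "RegS ((P ^^ M) (\<lambda>y. \<bar>H y\<bar>)) (\<alpha> ^ M * (c / \<alpha> ^ M) + D0) 1"
    by (rule RegS_Pn[OF _ R]) simp
  have e: "\<alpha> ^ M * (c / \<alpha> ^ M) + D0 = c + D0" using alpha0 by simp
  have "(P ^^ M) (\<lambda>y. \<bar>H y\<bar>) x \<le> exp (real N0 * Phi + (c + D0) * \<alpha>) * integral\<^sup>L \<mu> (\<lambda>y. \<bar>H y\<bar>)" if x: "x \<in> X" for x
    using sup_by_int[OF R2[unfolded e] good_Pn[OF g] x] Pn_int[OF g] by simp
  then show ?thesis using g by blast
qed


lemma k_rho: "real k * \<rho> ^ k \<le> \<rho> / (1 - \<rho>)"
proof -
  define x where "x = 1 / \<rho> - 1"
  have x0: "0 < x" using rho0 rho1 by (simp add: x_def field_simps)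
  have "1 + real k * x \<le> (1 + x) ^ k" using x0 by (intro Bernoulli_inequality) simp
  also have "(1 + x) ^ k = 1 / \<rho> ^ k" by (simp add: x_def power_divide)
  finally have "(1 + real k * x) * \<rho> ^ k \<le> 1" using rho0 by (simp add: field_simps)
  then have "real k * x * \<rho> ^ k \<le> 1" using rho0 by (simp add: algebra_simps) (smt (verit) zero_le_power)
  then have "real k * \<rho> ^ k \<le> 1 / x" using x0 by (simp add: field_simps)
  also have "1 / x = \<rho> / (1 - \<rho>)" using rho0 rho1 by (simp add: x_def field_simps)
  finally show ?thesis .
qed

lemma main:
  assumes c: "0 < c"
  shows "\<exists>K>1. \<exists>u0>0. \<forall>u. 0 < u \<and> u < u0 \<longrightarrow>
           (\<forall>(L::real) (M::nat) (k::nat) (H :: (nat \<Rightarrow> 'a) \<Rightarrow> real).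
              M \<ge> 1 \<longrightarrow> k \<ge> M\<^sup>2 \<longrightarrow> H \<in> borel_measurable \<mu> \<longrightarrow>
              (\<forall>y\<in>sft A. \<forall>z\<in>sft A. same_cylinder M y z \<longrightarrow>
                  \<bar>H y\<bar> \<le> \<bar>H z\<bar> * exp (c * (1 / \<theta>) ^ M * dtheta \<theta> y z)) \<longrightarrow>
              (\<forall>x\<in>sft A.
                 (transfer A \<phi> ^^ k)
                   (\<lambda>y. (if real_of_int (birkhoff (\<lambda>x. h0 (x 0)) k y) \<ge> L then 1 else 0) * H y) x
                 \<le> K * exp (- (u * L / sqrt (real k))) * integral\<^sup>L \<mu> (\<lambda>y. \<bar>H y\<bar>)))"
proof -
  define K1 where "K1 = exp (real N0 * Phi + (c + D0) * \<alpha>)"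
  define W where "W = \<rho> / (1 - \<rho>)"
  define C where "C = exp (2 * U) * exp (Kd * W + B\<^sup>2) * exp B * K1"
  define u0 where "u0 = 1 / (B + 1)"
  have C0: "0 < C" unfolding C_def K1_def by simp
  have u0: "0 < u0" "u0 \<le> 1" using B1 by (auto simp: u0_def)
  have "1 < C + 1" using C0 by simp
  moreover have "\<forall>u. 0 < u \<and> u < u0 \<longrightarrow>
           (\<forall>(L::real) (M::nat) (k::nat) (H :: (nat \<Rightarrow> 'a) \<Rightarrow> real).
              M \<ge> 1 \<longrightarrow> k \<ge> M\<^sup>2 \<longrightarrow> H \<in> borel_measurable \<mu> \<longrightarrow>
              (\<forall>y\<in>sft A. \<forall>z\<in>sft A. same_cylinder M y z \<longrightarrow>
                  \<bar>H y\<bar> \<le> \<bar>H z\<bar> * exp (c * (1 / \<theta>) ^ M * dtheta \<theta> y z)) \<longrightarrow>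
              (\<forall>x\<in>sft A.
                 (transfer A \<phi> ^^ k)
                   (\<lambda>y. (if real_of_int (birkhoff (\<lambda>x. h0 (x 0)) k y) \<ge> L then 1 else 0) * H y) x
                 \<le> (C + 1) * exp (- (u * L / sqrt (real k))) * integral\<^sup>L \<mu> (\<lambda>y. \<bar>H y\<bar>)))"
  proof (intro allI impI ballI)
    fix u L M k H x
    assume u: "0 < u \<and> u < u0" and M1: "1 \<le> M" and kM: "M\<^sup>2 \<le> k" and Hm: "H \<in> borel_measurable \<mu>"
      and Hc: "\<forall>y\<in>X. \<forall>z\<in>X. same_cylinder M y z \<longrightarrow> \<bar>H y\<bar> \<le> \<bar>H z\<bar> * exp (c * (1 / \<theta>) ^ M * dtheta \<theta> y z)"
      and x: "x \<in> X"
    define sk where "sk = sqrt (real k)"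
    define t where "t = u / sk"
    define AH where "AH = (\<lambda>y. \<bar>H y\<bar>)"
    define IH where "IH = integral\<^sup>L \<mu> AH"
    have k1: "1 \<le> k" using M1 kM by (metis le_trans one_le_power)
    have sk1: "1 \<le> sk" using k1 by (simp add: sk_def)
    have Msk: "real M \<le> sk"
    proof -
      have "real M = sqrt (real (M\<^sup>2))" by simp
      also have "\<dots> \<le> sk" unfolding sk_def using kM by (subst real_sqrt_le_iff) simp
      finally show ?thesis .
    qed
    have ksk: "sk \<le> real k"
    proof -
      have "sk * 1 \<le> sk * sk" using sk1 by (intro mult_left_mono) auto
      then show ?thesis by (simp add: sk_def)
    qed
    have u1: "u < 1" "0 < u" using u u0 by auto
    have t0: "0 < t" using u1 sk1 by (simp add: t_def)
    have tu: "t \<le> u" using u1 sk1 by (simp add: t_def field_simps)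
    have tB: "t * B \<le> 1"
    proof -
      have "t * B \<le> u * B" using tu B1 by (intro mult_right_mono) auto
      also have "\<dots> \<le> u0 * B" using u B1 by (intro mult_right_mono) auto
      also have "\<dots> \<le> 1" using B1 by (simp add: u0_def field_simps)
      finally show ?thesis .
    qed
    have tL: "t * L = u * L / sqrt (real k)" by (simp add: t_def sk_def)
    have AH0: "\<And>y. 0 \<le> AH y" by (simp add: AH_def)
    note HG = H_gibbs[OF c Hm Hc]
    have gAH: "good AH" using HG by (simp add: AH_def)
    have IH0: "0 \<le> IH" unfolding IH_def by (rule int_ge[OF gAH]) (simp add: AH_def)
    have PM: "\<And>y. y \<in> X \<Longrightarrow> (P ^^ M) AH y \<le> K1 * IH" using HG by (simp add: AH_def K1_def IH_def)
    have s1: "(P ^^ k) (\<lambda>y. (if real_of_int (birkhoff (\<lambda>x. h0 (x 0)) k y) \<ge> L then 1 else 0) * H y) x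
        \<le> (P ^^ k) (\<lambda>y. (exp (- (t * L)) * exp (2 * t * U)) * (exp (t * gk k k y) * AH y)) x"
    proof (rule Pn_mono[OF _ x])
      fix y assume y: "y \<in> X"
      define hk where "hk = real_of_int (birkhoff (\<lambda>x. h0 (x 0)) k y)"
      have e1: "exp (t * (hk - L)) \<le> exp (- (t * L)) * exp (2 * t * U) * exp (t * gk k k y)"
      proof -
        have "t * (hk - L) \<le> t * (gk k k y + 2 * U - L)" using birk_le[OF y, of k] t0 unfolding hk_def
          by (intro mult_left_mono) auto
        then have "exp (t * (hk - L)) \<le> exp (t * (gk k k y + 2 * U - L))" by simp
        also have "\<dots> = exp (- (t * L)) * exp (2 * t * U) * exp (t * gk k k y)"
          by (simp add: exp_add[symmetric] algebra_simps)
        finally show ?thesis .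
      qed
      have "(if hk \<ge> L then 1 else 0) * H y \<le> exp (t * (hk - L)) * AH y"
      proof (cases "hk \<ge> L")
        case True
        then have "1 \<le> exp (t * (hk - L))" using t0 by simp
        then have "AH y \<le> exp (t * (hk - L)) * AH y" using AH0[of y] by (simp add: mult_le_cancel_right1)
        then show ?thesis using True by (simp add: AH_def)
      next
        case False then show ?thesis using AH0[of y] by simp
      qed
      also have "\<dots> \<le> exp (- (t * L)) * exp (2 * t * U) * exp (t * gk k k y) * AH y"
        using e1 AH0[of y] by (intro mult_right_mono) auto
      finally show "(if real_of_int (birkhoff (\<lambda>x. h0 (x 0)) k y) \<ge> L then 1 else 0) * H y
          \<le> (exp (- (t * L)) * exp (2 * t * U)) * (exp (t * gk k k y) * AH y)"
        unfolding hk_def by (simp add: mult.assoc)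
    qed
    have s2: "(P ^^ k) (\<lambda>y. (exp (- (t * L)) * exp (2 * t * U)) * (exp (t * gk k k y) * AH y)) x
        = exp (- (t * L)) * exp (2 * t * U) * (Rop k t ^^ k) AH x"
      unfolding Pn_cmult R_closed by simp
    define G0 where "G0 = (Rop k t ^^ M) AH"
    define S where "S = exp (t * B) ^ M * (K1 * IH)"
    have G0b: "0 \<le> G0 y \<and> G0 y \<le> S" if y: "y \<in> X" for y
    proof
      show "0 \<le> G0 y" unfolding G0_def R_closed by (rule Pn_nonneg[OF _ y]) (simp add: AH0)
      have "G0 y \<le> exp (t * B) ^ M * (P ^^ M) AH y" unfolding G0_def
        by (rule R_le_P[OF less_imp_le[OF t0] AH0 y])
      also have "\<dots> \<le> S" unfolding S_def using PM[OF y] by (intro mult_left_mono) auto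
      finally show "G0 y \<le> S" .
    qed
    have kMsplit: "(Rop k t ^^ k) AH = (Rop k t ^^ (k - M)) G0"
    proof -
      have "M \<le> k" using kM M1 by (metis le_trans power2_nat_le_imp_le)
      then have "k = (k - M) + M" by simp
      then show ?thesis unfolding G0_def by (metis funpow_add comp_apply)
    qed
    have s3: "(Rop k t ^^ k) AH x \<le> S * Lam k t ^ (k - M)"
      unfolding kMsplit using R_sup[where F=G0 and S=S and k=k and i="k - M" and t=t, OF less_imp_le[OF t0] tB G0b x] by blast
    have Lam1: "1 \<le> Lam k t" unfolding Lam_def using t0 Kd0 rho0 by (simp add: zero_le_mult_iff)
    have LamK: "Lam k t ^ (k - M) \<le> Lam k t ^ k" using Lam1 by (intro power_increasing) auto
    have "Lam k t ^ k = exp (real k * (t * Kd * \<rho> ^ Suc k) + real k * t\<^sup>2 * B\<^sup>2)"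
      unfolding Lam_def by (simp add: exp_of_nat_mult[symmetric] algebra_simps)
    also have "\<dots> \<le> exp (Kd * W + B\<^sup>2)"
    proof -
      have kt2: "real k * t\<^sup>2 = u\<^sup>2" using k1 by (simp add: t_def sk_def power_divide)
      have "u\<^sup>2 \<le> 1" using u1 by (simp add: power_le_one)
      then have a: "real k * t\<^sup>2 * B\<^sup>2 \<le> B\<^sup>2" unfolding kt2 by (simp add: mult_left_le_one_le)
      have kss: "real k = sk * sk" by (simp add: sk_def)
      have "sk * (u / sk) = u" using sk1 by simp
      then have "real k * t = sk * u" unfolding kss t_def by (simp only: mult.assoc)
      also have "\<dots> \<le> sk * 1" using u1 sk1 by (intro mult_left_mono) auto
      finally have kt: "real k * t \<le> real k" using ksk by simp
      have "real k * (t * Kd * \<rho> ^ Suc k) = Kd * ((real k * t) * \<rho> ^ Suc k)" by (simp add: algebra_simps)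
      also have "\<dots> \<le> Kd * (real k * \<rho> ^ k)"
      proof -
        have "(real k * t) * \<rho> ^ Suc k \<le> real k * \<rho> ^ Suc k" using kt rho0 by (intro mult_right_mono) auto
        also have "\<dots> \<le> real k * \<rho> ^ k" using rho0 rho1 by (intro mult_left_mono power_decreasing) auto
        finally show ?thesis using Kd0 by (intro mult_left_mono) auto
      qed
      also have "\<dots> \<le> Kd * W" unfolding W_def using k_rho[of k] Kd0 by (intro mult_left_mono) auto
      finally show ?thesis using a by simp
    qed
    finally have LamB: "Lam k t ^ k \<le> exp (Kd * W + B\<^sup>2)" .
    have eB: "exp (t * B) ^ M \<le> exp B"
    proof -
      have "exp (t * B) ^ M = exp (real M * t * B)" by (simp add: exp_of_nat_mult[symmetric] algebra_simps)
      also have "real M * t \<le> 1"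
      proof -
        have "real M * (u / sk) \<le> sk * (u / sk)" using Msk u1 sk1 by (intro mult_right_mono) auto
        also have "\<dots> = u" using sk1 by simp
        finally show ?thesis using u1 by (simp add: t_def)
      qed
      then have "real M * t * B \<le> B" using B1 by (simp add: mult_left_le_one_le)
      then have "exp (real M * t * B) \<le> exp B" by simp
      finally show ?thesis .
    qed
    have eU: "exp (2 * t * U) \<le> exp (2 * U)"
    proof -
      have "t * (2 * U) \<le> 1 * (2 * U)" using tu u1 U0 by (intro mult_right_mono) auto
      then show ?thesis by (simp add: mult.assoc mult.left_commute)
    qed
    have "(P ^^ k) (\<lambda>y. (if real_of_int (birkhoff (\<lambda>x. h0 (x 0)) k y) \<ge> L then 1 else 0) * H y) x
        \<le> exp (- (t * L)) * exp (2 * t * U) * (Rop k t ^^ k) AH x" using s1 s2 by simp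
    also have "\<dots> \<le> exp (- (t * L)) * (exp (2 * t * U) * (S * Lam k t ^ k))"
    proof -
      have "(Rop k t ^^ k) AH x \<le> S * Lam k t ^ k"
      proof -
        have "0 \<le> S" using G0b[OF x] by linarith
        then have "S * Lam k t ^ (k - M) \<le> S * Lam k t ^ k" using LamK by (intro mult_left_mono)
        then show ?thesis using s3 by linarith
      qed
      then show ?thesis by (simp add: mult.assoc)
    qed
    also have "exp (2 * t * U) * (S * Lam k t ^ k) \<le> C * IH"
    proof -
      have "exp (2 * t * U) * (S * Lam k t ^ k) = exp (2 * t * U) * exp (t * B) ^ M * Lam k t ^ k * K1 * IH"
        by (simp add: S_def algebra_simps)
      also have "\<dots> \<le> exp (2 * U) * exp B * exp (Kd * W + B\<^sup>2) * K1 * IH"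
        using eU eB LamB IH0 Lam1 by (intro mult_right_mono mult_mono) (auto simp: K1_def)
      finally show ?thesis by (simp add: C_def algebra_simps)
    qed
    also have "exp (- (t * L)) * (C * IH) \<le> (C + 1) * exp (- (u * L / sqrt (real k))) * IH"
      unfolding tL using IH0 by (simp add: algebra_simps)
    finally show "(P ^^ k) (\<lambda>y. (if real_of_int (birkhoff (\<lambda>x. h0 (x 0)) k y) \<ge> L then 1 else 0) * H y) x
        \<le> (C + 1) * exp (- (u * L / sqrt (real k))) * integral\<^sup>L \<mu> (\<lambda>y. \<bar>H y\<bar>)"
      by (simp add: IH_def AH_def)
  qed
  ultimately show ?thesis using u0 by blast
qed

end
theorem lemma4p4:
  fixes A :: "'a::finite \<Rightarrow> 'a \<Rightarrow> bool"
    and \<phi> :: "(nat \<Rightarrow> 'a) \<Rightarrow> real"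
    and \<mu> :: "(nat \<Rightarrow> 'a) measure"
    and h0 :: "'a \<Rightarrow> int"
    and \<theta> c :: real
  assumes mixing: "topologically_mixing_sft A"
    and theta: "0 < \<theta>" "\<theta> < 1"
    and holder: "holder_potential A \<theta> \<phi>"
    and normalized: "normalized_potential A \<phi>"
    and equilibrium: "equilibrium_state A \<phi> \<mu>"
    and centered: "integral\<^sup>L \<mu> (\<lambda>x. real_of_int (h0 (x 0))) = 0"
    and nonarith: "non_arithmetic \<mu> (\<lambda>x. h0 (x 0))"
    and c_pos: "c > 0"
  shows "\<exists>K>1. \<exists>u0>0. \<forall>u. 0 < u \<and> u < u0 \<longrightarrow>
           (\<forall>(L::real) (M::nat) (k::nat) (H :: (nat \<Rightarrow> 'a) \<Rightarrow> real).
              M \<ge> 1 \<longrightarrow> k \<ge> M\<^sup>2 \<longrightarrow> H \<in> borel_measurable \<mu> \<longrightarrow>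
              (\<forall>y\<in>sft A. \<forall>z\<in>sft A. same_cylinder M y z \<longrightarrow>
                  \<bar>H y\<bar> \<le> \<bar>H z\<bar> * exp (c * (1 / \<theta>) ^ M * dtheta \<theta> y z)) \<longrightarrow>
              (\<forall>x\<in>sft A.
                 (transfer A \<phi> ^^ k)
                   (\<lambda>y. (if real_of_int (birkhoff (\<lambda>x. h0 (x 0)) k y) \<ge> L then 1 else 0) * H y) x
                 \<le> K * exp (- (u * L / sqrt (real k))) * integral\<^sup>L \<mu> (\<lambda>y. \<bar>H y\<bar>)))"
proof -
  interpret S1: sys A \<phi> \<mu> \<theta>
    by unfold_locales (use mixing theta holder normalized equilibrium in auto)
  obtain C \<beta> where b0: "\<beta> > 0" and hold: "\<forall>y\<in>sft A. \<forall>z\<in>sft A. \<bar>\<phi> y - \<phi> z\<bar> \<le> C * dtheta \<theta> y z powr \<beta>"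
    using holder unfolding holder_potential_def by blast
  define \<beta>' where "\<beta>' = min \<beta> 1"
  define C' where "C' = max C 0"
  have hold': "\<bar>\<phi> y - \<phi> z\<bar> \<le> C' * dtheta \<theta> y z powr \<beta>'" if y: "y \<in> sft A" and z: "z \<in> sft A" for y z
  proof -
    have d0: "0 \<le> dtheta \<theta> y z" using theta by (simp add: dtheta_nonneg)
    have d1: "dtheta \<theta> y z \<le> 1" using dtheta_le[of \<theta> 0 y z] theta by simp
    have "\<bar>\<phi> y - \<phi> z\<bar> \<le> C * dtheta \<theta> y z powr \<beta>" using hold y z by blast
    also have "\<dots> \<le> C' * dtheta \<theta> y z powr \<beta>" unfolding C'_def by (intro mult_right_mono) auto
    also have "\<dots> \<le> C' * dtheta \<theta> y z powr \<beta>'"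
      unfolding \<beta>'_def using d0 d1 by (intro mult_left_mono powr_mono') (auto simp: C'_def)
    finally show ?thesis .
  qed
  interpret S2: sys2 A \<phi> \<mu> \<theta> C' \<beta>'
    by unfold_locales (use b0 hold' in \<open>auto simp: \<beta>'_def C'_def\<close>)
  obtain Kd \<rho> where kr: "0 < \<rho>" "\<rho> < 1" "0 \<le> Kd"
    "\<forall>n. \<forall>x\<in>sft A. \<bar>(transfer A \<phi> ^^ n) (\<lambda>x. real_of_int (h0 (x 0))) x\<bar> \<le> Kd * \<rho> ^ n"
    using S2.decay_h[OF centered] by blast
  interpret S3: sys3 A \<phi> \<mu> \<theta> C' \<beta>' h0 Kd \<rho>
    by unfold_locales (use kr in auto)
  show ?thesis by (rule S3.main[OF c_pos])
qed

end
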